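(* Let $\mathcal{U}$ be a strict Fraïssé class, let $\mathbf{T}\in\overline{\mathcal{U}}$, and let $\mathcal{C}\subseteq\mathcal{U}$ be a Fraïssé class that is free in $\mathcal{U}$. Then there exists a universal homogeneous homomorphism $u:\mathbf{U}\to\mathbf{T}$ within $\overline{\mathcal{C}}$. Moreover, if $\hat u:\hat{\mathbf{U}}\to\mathbf{T}$ is another universal homogeneous homomorphism to $\mathbf{T}$ within $\overline{\mathcal{C}}$, then there is an isomorphism $h:\hat{\mathbf{U}}\to\mathbf{U}$ with $\hat u=u\circ h$.
   Context: Structures are first-order structures over a signature with arbitrarily many relation symbols and countably many function and constant symbols; an embedding is an injective homomorphism that also reflects all relations. An age is a class of finitely generated structures of one signature with countably many isomorphism types, closed under (isomorphic copies of) finitely generated substructures, and with the joint embedding property (any two members embed into a common member). For an age $\mathcal{C}$, $\overline{\mathcal{C}}$ is the class of all countable structures all of whose finitely generated substructures are isomorphic to members of $\mathcal{C}$. A Fraïssé class is an age with the amalgamation property (for embeddings $f_i:\mathbf{A}\hookrightarrow\mathbf{B}_i$ in $\mathcal{C}$ there are $\mathbf{C}\in\mathcal{C}$ and embeddings $g_i:\mathbf{B}_i\hookrightarrow\mathbf{C}$ with $g_1f_1=g_2f_2$). A Fraïssé class $\mathcal{U}$ is strict if for all $\mathbf{A},\mathbf{B}_1,\mathbf{B}_2\in\mathcal{U}$ and embeddings $f_i:\mathbf{A}\hookrightarrow\mathbf{B}_i$ there are $\mathbf{C}\in\mathcal{U}$ and homomorphisms $g_i:\mathbf{B}_i\to\mathbf{C}$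 such that $(\mathbf{C},(g_1,g_2))$ is a pushout of $f_1,f_2$ in the category of structures in $\overline{\mathcal{U}}$ with all homomorphisms (such a pushout is called the canonical amalgam). A Fraïssé class $\mathcal{C}\subseteq\mathcal{U}$ is free in $\mathcal{U}$ if it is closed under these canonical amalgams in $\mathcal{U}$. For $\mathbf{U}\in\overline{\mathcal{C}}$ and a countable structure $\mathbf{T}$, a homomorphism $u:\mathbf{U}\to\mathbf{T}$ is universal within $\overline{\mathcal{C}}$ if for every $\mathbf{A}\in\overline{\mathcal{C}}$ and homomorphism $h:\mathbf{A}\to\mathbf{T}$ there is an embedding $\iota:\mathbf{A}\hookrightarrow\mathbf{U}$ with $h=u\circ\iota$; it is homogeneous if for every finitely generated substructure $\mathbf{A}\le\mathbf{U}$ and every embedding $\iota:\mathbf{A}\hookrightarrow\mathbf{U}$ with $u\circ\iota=u\restriction_A$ there is an automorphism $\alpha$ of $\mathbf{U}$ with $u\circ\alpha=u$ and $\alpha\restriction_A=\iota$. *)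

theory Defs
  imports "HOL-Library.Countable_Set"
begin

text \<open>A signature is a pair (relation arities, function arities);
  relation symbols range over an arbitrary type 'r, function (and constant = 0-ary function)
  symbols over a countable type 'f. Structures have carriers that are subsets of nat, which
  suffices for all countable (in particular finitely generated) structures up to isomorphism.\<close>

record ('r, 'f) struc =
  dom :: "nat set"
  rel :: "'r \<Rightarrow> nat list \<Rightarrow> bool"
  fn  :: "'f \<Rightarrow> nat list \<Rightarrow> nat"

type_synonym ('r, 'f) sig = "('r \<Rightarrow> nat) \<times> ('f \<Rightarrow> nat)"

definition wf_struc :: "('r, 'f) sig \<Rightarrow> ('r, 'f) struc \<Rightarrow> bool" where
  "wf_struc \<sigma> A \<longleftrightarrow>
     (\<forall>f xs. set xs \<subseteq> dom A \<and> length xs = snd \<sigma> f \<longrightarrow> fn A f xs \<in> dom A) \<and>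
     (\<forall>r xs. rel A r xs \<longrightarrow> set xs \<subseteq> dom A \<and> length xs = fst \<sigma> r)"

definition hom :: "('r, 'f) sig \<Rightarrow> (nat \<Rightarrow> nat) \<Rightarrow> ('r, 'f) struc \<Rightarrow> ('r, 'f) struc \<Rightarrow> bool" where
  "hom \<sigma> h A B \<longleftrightarrow> h ` dom A \<subseteq> dom B \<and>
     (\<forall>f xs. set xs \<subseteq> dom A \<and> length xs = snd \<sigma> f \<longrightarrow> h (fn A f xs) = fn B f (map h xs)) \<and>
     (\<forall>r xs. set xs \<subseteq> dom A \<and> length xs = fst \<sigma> r \<and> rel A r xs \<longrightarrow> rel B r (map h xs))"

definition emb :: "('r, 'f) sig \<Rightarrow> (nat \<Rightarrow> nat) \<Rightarrow> ('r, 'f) struc \<Rightarrow> ('r, 'f) struc \<Rightarrow> bool" where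
  "emb \<sigma> h A B \<longleftrightarrow> hom \<sigma> h A B \<and> inj_on h (dom A) \<and>
     (\<forall>r xs. set xs \<subseteq> dom A \<and> length xs = fst \<sigma> r \<and> rel B r (map h xs) \<longrightarrow> rel A r xs)"

definition iso :: "('r, 'f) sig \<Rightarrow> (nat \<Rightarrow> nat) \<Rightarrow> ('r, 'f) struc \<Rightarrow> ('r, 'f) struc \<Rightarrow> bool" where
  "iso \<sigma> h A B \<longleftrightarrow> emb \<sigma> h A B \<and> h ` dom A = dom B"

definition isomorphic :: "('r, 'f) sig \<Rightarrow> ('r, 'f) struc \<Rightarrow> ('r, 'f) struc \<Rightarrow> bool" where
  "isomorphic \<sigma> A B \<longleftrightarrow> (\<exists>h. iso \<sigma> h A B)"

definition substr :: "('r, 'f) sig \<Rightarrow> ('r, 'f) struc \<Rightarrow> ('r, 'f) struc \<Rightarrow> bool" where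
  "substr \<sigma> B A \<longleftrightarrow> wf_struc \<sigma> B \<and> wf_struc \<sigma> A \<and> dom B \<subseteq> dom A \<and> emb \<sigma> (\<lambda>x. x) B A"

definition fin_gen :: "('r, 'f) sig \<Rightarrow> ('r, 'f) struc \<Rightarrow> bool" where
  "fin_gen \<sigma> A \<longleftrightarrow> wf_struc \<sigma> A \<and>
     (\<exists>X. finite X \<and> X \<subseteq> dom A \<and> (\<forall>B. substr \<sigma> B A \<and> X \<subseteq> dom B \<longrightarrow> dom B = dom A))"

definition is_age :: "('r, 'f) sig \<Rightarrow> ('r, 'f) struc set \<Rightarrow> bool" where
  "is_age \<sigma> K \<longleftrightarrow> K \<noteq> {} \<and>
     (\<forall>A\<in>K. fin_gen \<sigma> A) \<and>
     (\<exists>S. countable S \<and> S \<subseteq> K \<and> (\<forall>A\<in>K. \<exists>B\<in>S. isomorphic \<sigma> A B)) \<and>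
     (\<forall>A\<in>K. \<forall>B C. substr \<sigma> B A \<and> fin_gen \<sigma> B \<and> wf_struc \<sigma> C \<and> isomorphic \<sigma> C B \<longrightarrow> C \<in> K) \<and>
     (\<forall>A\<in>K. \<forall>B\<in>K. \<exists>C\<in>K. \<exists>f g. emb \<sigma> f A C \<and> emb \<sigma> g B C)"

definition amalg_prop :: "('r, 'f) sig \<Rightarrow> ('r, 'f) struc set \<Rightarrow> bool" where
  "amalg_prop \<sigma> K \<longleftrightarrow>
     (\<forall>A\<in>K. \<forall>B1\<in>K. \<forall>B2\<in>K. \<forall>f1 f2. emb \<sigma> f1 A B1 \<and> emb \<sigma> f2 A B2 \<longrightarrow>
        (\<exists>C\<in>K. \<exists>g1 g2. emb \<sigma> g1 B1 C \<and> emb \<sigma> g2 B2 C \<and> (\<forall>x\<in>dom A. g1 (f1 x) = g2 (f2 x))))"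

definition fraisse :: "('r, 'f) sig \<Rightarrow> ('r, 'f) struc set \<Rightarrow> bool" where
  "fraisse \<sigma> K \<longleftrightarrow> is_age \<sigma> K \<and> amalg_prop \<sigma> K"

text \<open>The class of countable structures all of whose f.g. substructures are isomorphic
  to members of K (overline K).\<close>
definition cl :: "('r, 'f) sig \<Rightarrow> ('r, 'f) struc set \<Rightarrow> ('r, 'f) struc set" where
  "cl \<sigma> K = {A. wf_struc \<sigma> A \<and>
     (\<forall>B. substr \<sigma> B A \<and> fin_gen \<sigma> B \<longrightarrow> (\<exists>C\<in>K. isomorphic \<sigma> B C))}"

definition pushout :: "('r, 'f) sig \<Rightarrow> ('r, 'f) struc set \<Rightarrow> ('r, 'f) struc \<Rightarrow> ('r, 'f) struc \<Rightarrow>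
    ('r, 'f) struc \<Rightarrow> (nat \<Rightarrow> nat) \<Rightarrow> (nat \<Rightarrow> nat) \<Rightarrow> ('r, 'f) struc \<Rightarrow> (nat \<Rightarrow> nat) \<Rightarrow> (nat \<Rightarrow> nat) \<Rightarrow> bool" where
  "pushout \<sigma> K A B1 B2 f1 f2 D g1 g2 \<longleftrightarrow>
     D \<in> cl \<sigma> K \<and> hom \<sigma> g1 B1 D \<and> hom \<sigma> g2 B2 D \<and> (\<forall>x\<in>dom A. g1 (f1 x) = g2 (f2 x)) \<and>
     (\<forall>E\<in>cl \<sigma> K. \<forall>k1 k2. hom \<sigma> k1 B1 E \<and> hom \<sigma> k2 B2 E \<and> (\<forall>x\<in>dom A. k1 (f1 x) = k2 (f2 x)) \<longrightarrow>
        (\<exists>k. hom \<sigma> k D E \<and> (\<forall>x\<in>dom B1. k (g1 x) = k1 x) \<and> (\<forall>x\<in>dom B2. k (g2 x) = k2 x) \<and>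
             (\<forall>k'. hom \<sigma> k' D E \<and> (\<forall>x\<in>dom B1. k' (g1 x) = k1 x) \<and> (\<forall>x\<in>dom B2. k' (g2 x) = k2 x)
                   \<longrightarrow> (\<forall>x\<in>dom D. k' x = k x))))"

definition strict_fraisse :: "('r, 'f) sig \<Rightarrow> ('r, 'f) struc set \<Rightarrow> bool" where
  "strict_fraisse \<sigma> U \<longleftrightarrow> fraisse \<sigma> U \<and>
     (\<forall>A\<in>U. \<forall>B1\<in>U. \<forall>B2\<in>U. \<forall>f1 f2. emb \<sigma> f1 A B1 \<and> emb \<sigma> f2 A B2 \<longrightarrow>
        (\<exists>D\<in>U. \<exists>g1 g2. pushout \<sigma> U A B1 B2 f1 f2 D g1 g2))"

definition free_in :: "('r, 'f) sig \<Rightarrow> ('r, 'f) struc set \<Rightarrow> ('r, 'f) struc set \<Rightarrow> bool" where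
  "free_in \<sigma> C U \<longleftrightarrow>
     (\<forall>A\<in>C. \<forall>B1\<in>C. \<forall>B2\<in>C. \<forall>f1 f2 D g1 g2.
        emb \<sigma> f1 A B1 \<and> emb \<sigma> f2 A B2 \<and> D \<in> U \<and> pushout \<sigma> U A B1 B2 f1 f2 D g1 g2 \<longrightarrow> D \<in> C)"

definition universal_within :: "('r, 'f) sig \<Rightarrow> ('r, 'f) struc set \<Rightarrow> (nat \<Rightarrow> nat) \<Rightarrow>
    ('r, 'f) struc \<Rightarrow> ('r, 'f) struc \<Rightarrow> bool" where
  "universal_within \<sigma> C u U T \<longleftrightarrow> U \<in> cl \<sigma> C \<and> wf_struc \<sigma> T \<and> hom \<sigma> u U T \<and>
     (\<forall>A\<in>cl \<sigma> C. \<forall>h. hom \<sigma> h A T \<longrightarrow> (\<exists>\<iota>. emb \<sigma> \<iota> A U \<and> (\<forall>x\<in>dom A. h x = u (\<iota> x))))"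

definition homogeneous_hom :: "('r, 'f) sig \<Rightarrow> (nat \<Rightarrow> nat) \<Rightarrow> ('r, 'f) struc \<Rightarrow> ('r, 'f) struc \<Rightarrow> bool" where
  "homogeneous_hom \<sigma> u U T \<longleftrightarrow> hom \<sigma> u U T \<and>
     (\<forall>A \<iota>. substr \<sigma> A U \<and> fin_gen \<sigma> A \<and> emb \<sigma> \<iota> A U \<and> (\<forall>x\<in>dom A. u (\<iota> x) = u x) \<longrightarrow>
        (\<exists>\<alpha>. iso \<sigma> \<alpha> U U \<and> (\<forall>x\<in>dom U. u (\<alpha> x) = u x) \<and> (\<forall>x\<in>dom A. \<alpha> x = \<iota> x)))"

end

theory Submission
  imports Defs
begin


definition closedin :: "('r,'f) sig \<Rightarrow> ('r,'f) struc \<Rightarrow> nat set \<Rightarrow> bool" where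
  "closedin \<sigma> A S \<longleftrightarrow> S \<subseteq> dom A \<and>
     (\<forall>F xs. set xs \<subseteq> S \<and> length xs = snd \<sigma> F \<longrightarrow> fn A F xs \<in> S)"

definition genset :: "('r,'f) sig \<Rightarrow> ('r,'f) struc \<Rightarrow> nat set \<Rightarrow> nat set" where
  "genset \<sigma> A X = \<Inter>{S. closedin \<sigma> A S \<and> X \<subseteq> S}"

definition restr :: "('r,'f) struc \<Rightarrow> nat set \<Rightarrow> ('r,'f) struc" where
  "restr A S = \<lparr>dom = S, rel = (\<lambda>R xs. rel A R xs \<and> set xs \<subseteq> S), fn = fn A\<rparr>"

definition genstr :: "('r,'f) sig \<Rightarrow> ('r,'f) struc \<Rightarrow> nat set \<Rightarrow> ('r,'f) struc" where
  "genstr \<sigma> A X = restr A (genset \<sigma> A X)"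

lemma restr_simps[simp]: "dom (restr A S) = S" "fn (restr A S) = fn A"
  "rel (restr A S) R xs \<longleftrightarrow> rel A R xs \<and> set xs \<subseteq> S"
  by (auto simp: restr_def)

lemma genstr_simps[simp]: "dom (genstr \<sigma> A X) = genset \<sigma> A X" "fn (genstr \<sigma> A X) = fn A"
  "rel (genstr \<sigma> A X) R xs \<longleftrightarrow> rel A R xs \<and> set xs \<subseteq> genset \<sigma> A X"
  by (auto simp: genstr_def)

lemma wf_closed_dom: "wf_struc \<sigma> A \<Longrightarrow> closedin \<sigma> A (dom A)"
  by (auto simp: wf_struc_def closedin_def)

lemma genset_sub_dom: "wf_struc \<sigma> A \<Longrightarrow> X \<subseteq> dom A \<Longrightarrow> genset \<sigma> A X \<subseteq> dom A"
  unfolding genset_def using wf_closed_dom by blast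

lemma genset_least: "closedin \<sigma> A S \<Longrightarrow> X \<subseteq> S \<Longrightarrow> genset \<sigma> A X \<subseteq> S"
  unfolding genset_def by blast

lemma genset_incl: "X \<subseteq> genset \<sigma> A X"
  unfolding genset_def by blast

lemma genset_closed: "wf_struc \<sigma> A \<Longrightarrow> X \<subseteq> dom A \<Longrightarrow> closedin \<sigma> A (genset \<sigma> A X)"
  using genset_sub_dom[of \<sigma> A X] unfolding closedin_def genset_def by blast

lemma genset_mono: "wf_struc \<sigma> A \<Longrightarrow> Y \<subseteq> dom A \<Longrightarrow> X \<subseteq> Y \<Longrightarrow> genset \<sigma> A X \<subseteq> genset \<sigma> A Y"
  by (meson genset_closed genset_incl genset_least order_trans)

lemma genset_fn: "wf_struc \<sigma> A \<Longrightarrow> X \<subseteq> dom A \<Longrightarrow> set xs \<subseteq> genset \<sigma> A X \<Longrightarrow> length xs = snd \<sigma> F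
   \<Longrightarrow> fn A F xs \<in> genset \<sigma> A X"
  using genset_closed unfolding closedin_def by blast

lemma wf_restr: "wf_struc \<sigma> A \<Longrightarrow> closedin \<sigma> A S \<Longrightarrow> wf_struc \<sigma> (restr A S)"
  unfolding wf_struc_def closedin_def by auto

lemma substr_restr: "wf_struc \<sigma> A \<Longrightarrow> closedin \<sigma> A S \<Longrightarrow> substr \<sigma> (restr A S) A"
  unfolding substr_def emb_def hom_def using wf_restr[of \<sigma> A S]
  by (auto simp: closedin_def wf_struc_def)

lemma substr_genstr: "wf_struc \<sigma> A \<Longrightarrow> X \<subseteq> dom A \<Longrightarrow> substr \<sigma> (genstr \<sigma> A X) A"
  unfolding genstr_def by (intro substr_restr genset_closed)

lemma wf_genstr: "wf_struc \<sigma> A \<Longrightarrow> X \<subseteq> dom A \<Longrightarrow> wf_struc \<sigma> (genstr \<sigma> A X)"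
  using substr_genstr substr_def by blast

lemma substr_fn: "substr \<sigma> B A \<Longrightarrow> set xs \<subseteq> dom B \<Longrightarrow> length xs = snd \<sigma> F \<Longrightarrow> fn A F xs = fn B F xs"
  unfolding substr_def emb_def hom_def by (auto simp: map_idI)

lemma substr_rel: "substr \<sigma> B A \<Longrightarrow> set xs \<subseteq> dom B \<Longrightarrow> rel A R xs = rel B R xs"
  unfolding substr_def emb_def hom_def wf_struc_def by (metis map_idI)

lemma substr_closed: "substr \<sigma> B A \<Longrightarrow> closedin \<sigma> A (dom B)"
  unfolding closedin_def using substr_fn[of \<sigma> B A]
  by (metis (no_types, lifting) substr_def wf_struc_def)

lemma fin_gen_genstr: "wf_struc \<sigma> A \<Longrightarrow> finite X \<Longrightarrow> X \<subseteq> dom A \<Longrightarrow> fin_gen \<sigma> (genstr \<sigma> A X)"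
  unfolding fin_gen_def
proof (intro conjI exI[of _ X])
  assume w: "wf_struc \<sigma> A" and f: "finite X" and X: "X \<subseteq> dom A"
  show "wf_struc \<sigma> (genstr \<sigma> A X)" using w X by (rule wf_genstr)
  show "finite X" by fact
  show "X \<subseteq> dom (genstr \<sigma> A X)" using genset_incl by simp
  show "\<forall>B. substr \<sigma> B (genstr \<sigma> A X) \<and> X \<subseteq> dom B \<longrightarrow> dom B = dom (genstr \<sigma> A X)"
  proof (intro allI impI)
    fix B assume B: "substr \<sigma> B (genstr \<sigma> A X) \<and> X \<subseteq> dom B"
    have "closedin \<sigma> (genstr \<sigma> A X) (dom B)" using B substr_closed by blast
    hence "closedin \<sigma> A (dom B)" using genset_sub_dom[OF w X] unfolding closedin_def by auto
    hence "genset \<sigma> A X \<subseteq> dom B" using B genset_least by blast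
    moreover have "dom B \<subseteq> genset \<sigma> A X" using B unfolding substr_def by simp
    ultimately show "dom B = dom (genstr \<sigma> A X)" by simp
  qed
qed

lemma fin_gen_D: "fin_gen \<sigma> A \<Longrightarrow> \<exists>X. finite X \<and> X \<subseteq> dom A \<and> genset \<sigma> A X = dom A"
proof -
  assume "fin_gen \<sigma> A"
  then obtain X where w: "wf_struc \<sigma> A" and X: "finite X" "X \<subseteq> dom A"
    and P: "\<forall>B. substr \<sigma> B A \<and> X \<subseteq> dom B \<longrightarrow> dom B = dom A" unfolding fin_gen_def by blast
  have "dom (genstr \<sigma> A X) = dom A" using P substr_genstr[OF w X(2)] genset_incl[of X \<sigma> A] by (metis genstr_simps(1))
  thus ?thesis using X by auto
qed


lemma map_cong_set: "set xs \<subseteq> S \<Longrightarrow> (\<forall>x\<in>S. f x = g x) \<Longrightarrow> map f xs = map g xs"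
  by (induct xs) auto

lemma set_sub_image_map: "set ys \<subseteq> h ` G \<Longrightarrow> \<exists>xs. set xs \<subseteq> G \<and> ys = map h xs"
proof (induct ys)
  case Nil then show ?case by auto
next
  case (Cons y ys)
  then obtain xs where "set xs \<subseteq> G" "ys = map h xs" by auto
  moreover obtain x where "x \<in> G" "y = h x" using Cons.prems by auto
  ultimately show ?case by (intro exI[of _ "x#xs"]) auto
qed

lemma wf_fn: "wf_struc \<sigma> A \<Longrightarrow> set xs \<subseteq> dom A \<Longrightarrow> length xs = snd \<sigma> F \<Longrightarrow> fn A F xs \<in> dom A"
  unfolding wf_struc_def by blast

lemma wf_rel: "wf_struc \<sigma> A \<Longrightarrow> rel A R xs \<Longrightarrow> set xs \<subseteq> dom A \<and> length xs = fst \<sigma> R"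
  unfolding wf_struc_def by blast

lemma homD: "hom \<sigma> f A B \<Longrightarrow> x \<in> dom A \<Longrightarrow> f x \<in> dom B"
  "hom \<sigma> f A B \<Longrightarrow> set xs \<subseteq> dom A \<Longrightarrow> length xs = snd \<sigma> F \<Longrightarrow> f (fn A F xs) = fn B F (map f xs)"
  "hom \<sigma> f A B \<Longrightarrow> set xs \<subseteq> dom A \<Longrightarrow> length xs = fst \<sigma> R \<Longrightarrow> rel A R xs \<Longrightarrow> rel B R (map f xs)"
  unfolding hom_def by blast+

lemma embD: "emb \<sigma> f A B \<Longrightarrow> hom \<sigma> f A B" "emb \<sigma> f A B \<Longrightarrow> inj_on f (dom A)"
  "emb \<sigma> f A B \<Longrightarrow> set xs \<subseteq> dom A \<Longrightarrow> length xs = fst \<sigma> R \<Longrightarrow> rel B R (map f xs) \<Longrightarrow> rel A R xs"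
  unfolding emb_def by blast+

lemma homI:
  assumes "\<And>x. x \<in> dom A \<Longrightarrow> f x \<in> dom B"
    "\<And>F xs. set xs \<subseteq> dom A \<Longrightarrow> length xs = snd \<sigma> F \<Longrightarrow> f (fn A F xs) = fn B F (map f xs)"
    "\<And>R xs. set xs \<subseteq> dom A \<Longrightarrow> length xs = fst \<sigma> R \<Longrightarrow> rel A R xs \<Longrightarrow> rel B R (map f xs)"
  shows "hom \<sigma> f A B"
  unfolding hom_def using assms by blast

lemma embI:
  assumes "hom \<sigma> f A B" "inj_on f (dom A)"
    "\<And>R xs. set xs \<subseteq> dom A \<Longrightarrow> length xs = fst \<sigma> R \<Longrightarrow> rel B R (map f xs) \<Longrightarrow> rel A R xs"
  shows "emb \<sigma> f A B"
  unfolding emb_def using assms by blast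

lemma hom_cong: "wf_struc \<sigma> A \<Longrightarrow> hom \<sigma> f A B \<Longrightarrow> \<forall>x\<in>dom A. f x = g x \<Longrightarrow> hom \<sigma> g A B"
proof (rule homI)
  assume w: "wf_struc \<sigma> A" and h: "hom \<sigma> f A B" and E: "\<forall>x\<in>dom A. f x = g x"
  show "x \<in> dom A \<Longrightarrow> g x \<in> dom B" for x using homD(1)[OF h, of x] E by simp
  show "set xs \<subseteq> dom A \<Longrightarrow> length xs = snd \<sigma> F \<Longrightarrow> g (fn A F xs) = fn B F (map g xs)" for xs F
    using homD(2)[OF h] E wf_fn[OF w] map_cong_set[of xs "dom A" f g] by metis
  show "set xs \<subseteq> dom A \<Longrightarrow> length xs = fst \<sigma> R \<Longrightarrow> rel A R xs \<Longrightarrow> rel B R (map g xs)" for xs R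
    using homD(3)[OF h] E map_cong_set[of xs "dom A" f g] by metis
qed

lemma emb_cong: "wf_struc \<sigma> A \<Longrightarrow> emb \<sigma> f A B \<Longrightarrow> \<forall>x\<in>dom A. f x = g x \<Longrightarrow> emb \<sigma> g A B"
proof (rule embI)
  assume w: "wf_struc \<sigma> A" and h: "emb \<sigma> f A B" and E: "\<forall>x\<in>dom A. f x = g x"
  show "hom \<sigma> g A B" using hom_cong[OF w embD(1)[OF h] E] .
  show "inj_on g (dom A)" using embD(2)[OF h] E inj_on_cong[of "dom A" f g] by simp
  show "set xs \<subseteq> dom A \<Longrightarrow> length xs = fst \<sigma> R \<Longrightarrow> rel B R (map g xs) \<Longrightarrow> rel A R xs" for xs R
    using embD(3)[OF h] E map_cong_set[of xs "dom A" f g] by metis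
qed

lemma hom_comp: "hom \<sigma> f A B \<Longrightarrow> hom \<sigma> g B C \<Longrightarrow> hom \<sigma> (\<lambda>x. g (f x)) A C"
proof (rule homI)
  assume f: "hom \<sigma> f A B" and g: "hom \<sigma> g B C"
  show "x \<in> dom A \<Longrightarrow> g (f x) \<in> dom C" for x using f g homD(1) by metis
  show "set xs \<subseteq> dom A \<Longrightarrow> length xs = snd \<sigma> F \<Longrightarrow> g (f (fn A F xs)) = fn C F (map (\<lambda>x. g (f x)) xs)" for xs F
  proof -
    assume a: "set xs \<subseteq> dom A" "length xs = snd \<sigma> F"
    have "set (map f xs) \<subseteq> dom B" using a homD(1)[OF f] by auto
    thus ?thesis using a homD(2)[OF f a] homD(2)[OF g, of "map f xs" F] by (simp add: comp_def)
  qed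
  show "set xs \<subseteq> dom A \<Longrightarrow> length xs = fst \<sigma> R \<Longrightarrow> rel A R xs \<Longrightarrow> rel C R (map (\<lambda>x. g (f x)) xs)" for xs R
  proof -
    assume a: "set xs \<subseteq> dom A" "length xs = fst \<sigma> R" "rel A R xs"
    have "set (map f xs) \<subseteq> dom B" using a homD(1)[OF f] by auto
    thus ?thesis using a homD(3)[OF f a] homD(3)[OF g, of "map f xs" R] by (simp add: comp_def)
  qed
qed

lemma emb_comp: "emb \<sigma> f A B \<Longrightarrow> emb \<sigma> g B C \<Longrightarrow> emb \<sigma> (\<lambda>x. g (f x)) A C"
proof (rule embI)
  assume f: "emb \<sigma> f A B" and g: "emb \<sigma> g B C"
  show "hom \<sigma> (\<lambda>x. g (f x)) A C" using hom_comp embD(1) f g by blast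
  show "inj_on (\<lambda>x. g (f x)) (dom A)"
  proof (rule inj_onI)
    fix x y assume "x \<in> dom A" "y \<in> dom A" "g (f x) = g (f y)"
    moreover have "f x \<in> dom B" "f y \<in> dom B" using calculation homD(1)[OF embD(1)[OF f]] by auto
    ultimately show "x = y" using embD(2)[OF f] embD(2)[OF g] by (auto dest: inj_onD)
  qed
  show "set xs \<subseteq> dom A \<Longrightarrow> length xs = fst \<sigma> R \<Longrightarrow> rel C R (map (\<lambda>x. g (f x)) xs) \<Longrightarrow> rel A R xs" for xs R
  proof -
    assume a: "set xs \<subseteq> dom A" "length xs = fst \<sigma> R" "rel C R (map (\<lambda>x. g (f x)) xs)"
    have "set (map f xs) \<subseteq> dom B" using a homD(1)[OF embD(1)[OF f]] by auto
    hence "rel B R (map f xs)" using a embD(3)[OF g, of "map f xs" R] by (simp add: comp_def)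
    thus ?thesis using embD(3)[OF f a(1,2)] by simp
  qed
qed

lemma emb_id_substr: "substr \<sigma> B A \<Longrightarrow> emb \<sigma> (\<lambda>x. x) B A"
  unfolding substr_def by blast

lemma emb_substr_up: "emb \<sigma> f A M \<Longrightarrow> substr \<sigma> M U \<Longrightarrow> emb \<sigma> f A U"
proof -
  assume a: "emb \<sigma> f A M" "substr \<sigma> M U"
  have "emb \<sigma> (\<lambda>x. (\<lambda>y. y) (f x)) A U" by (rule emb_comp[OF a(1) emb_id_substr[OF a(2)]])
  thus ?thesis by simp
qed

lemma hom_substr_down: "substr \<sigma> B A \<Longrightarrow> hom \<sigma> f A C \<Longrightarrow> hom \<sigma> f B C"
proof -
  assume a: "substr \<sigma> B A" "hom \<sigma> f A C"
  have "hom \<sigma> (\<lambda>x. f ((\<lambda>y. y) x)) B C" by (rule hom_comp[OF embD(1)[OF emb_id_substr[OF a(1)]] a(2)])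
  thus ?thesis by simp
qed

lemma emb_substr_down: "substr \<sigma> B A \<Longrightarrow> emb \<sigma> f A C \<Longrightarrow> emb \<sigma> f B C"
proof -
  assume a: "substr \<sigma> B A" "emb \<sigma> f A C"
  have "emb \<sigma> (\<lambda>x. f ((\<lambda>y. y) x)) B C" by (rule emb_comp[OF emb_id_substr[OF a(1)] a(2)])
  thus ?thesis by simp
qed

lemma emb_into_substr:
  assumes e: "emb \<sigma> f A U" and M: "substr \<sigma> M U" and im: "f ` dom A \<subseteq> dom M"
    and w: "wf_struc \<sigma> A"
  shows "emb \<sigma> f A M"
proof (rule embI)
  show "hom \<sigma> f A M"
  proof (rule homI)
    show "x \<in> dom A \<Longrightarrow> f x \<in> dom M" for x using im by auto
    show "set xs \<subseteq> dom A \<Longrightarrow> length xs = snd \<sigma> F \<Longrightarrow> f (fn A F xs) = fn M F (map f xs)" for xs F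
    proof -
      assume a: "set xs \<subseteq> dom A" "length xs = snd \<sigma> F"
      have "set (map f xs) \<subseteq> dom M" using a im by auto
      thus ?thesis using homD(2)[OF embD(1)[OF e] a] substr_fn[OF M, of "map f xs" F] a by simp
    qed
    show "set xs \<subseteq> dom A \<Longrightarrow> length xs = fst \<sigma> R \<Longrightarrow> rel A R xs \<Longrightarrow> rel M R (map f xs)" for xs R
    proof -
      assume a: "set xs \<subseteq> dom A" "length xs = fst \<sigma> R" "rel A R xs"
      have "set (map f xs) \<subseteq> dom M" using a im by auto
      thus ?thesis using homD(3)[OF embD(1)[OF e] a] substr_rel[OF M, of "map f xs" R] a by simp
    qed
  qed
  show "inj_on f (dom A)" using embD(2)[OF e] .
  show "set xs \<subseteq> dom A \<Longrightarrow> length xs = fst \<sigma> R \<Longrightarrow> rel M R (map f xs) \<Longrightarrow> rel A R xs" for xs R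
  proof -
    assume a: "set xs \<subseteq> dom A" "length xs = fst \<sigma> R" "rel M R (map f xs)"
    have "set (map f xs) \<subseteq> dom M" using a im by auto
    thus ?thesis using embD(3)[OF e a(1,2)] substr_rel[OF M, of "map f xs" R] a by simp
  qed
qed

lemma emb_inv_restr:
  assumes e: "emb \<sigma> e B C" and w: "wf_struc \<sigma> B" and S: "S \<subseteq> e ` dom B"
  shows "emb \<sigma> (inv_into (dom B) e) (restr C S) B"
proof -
  let ?i = "inv_into (dom B) e"
  have inj: "inj_on e (dom B)" using embD(2)[OF e] .
  have mp: "set zs \<subseteq> S \<Longrightarrow> set (map ?i zs) \<subseteq> dom B \<and> map e (map ?i zs) = zs" for zs
    using S by (induct zs) (auto simp: inv_into_into f_inv_into_f)
  show ?thesis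
  proof (rule embI)
    show "hom \<sigma> ?i (restr C S) B"
    proof (rule homI)
      show "x \<in> dom (restr C S) \<Longrightarrow> ?i x \<in> dom B" for x using S by (auto simp: inv_into_into)
      show "set xs \<subseteq> dom (restr C S) \<Longrightarrow> length xs = snd \<sigma> F \<Longrightarrow>
          ?i (fn (restr C S) F xs) = fn B F (map ?i xs)" for xs F
      proof -
        assume a: "set xs \<subseteq> dom (restr C S)" "length xs = snd \<sigma> F"
        have m: "set (map ?i xs) \<subseteq> dom B" "map e (map ?i xs) = xs" using mp a by auto
        have "fn C F xs = e (fn B F (map ?i xs))" using homD(2)[OF embD(1)[OF e] m(1)] a m(2) by simp
        moreover have "fn B F (map ?i xs) \<in> dom B" using wf_fn[OF w m(1)] a by simp
        ultimately show ?thesis using inj by simp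
      qed
      show "set xs \<subseteq> dom (restr C S) \<Longrightarrow> length xs = fst \<sigma> R \<Longrightarrow> rel (restr C S) R xs \<Longrightarrow>
          rel B R (map ?i xs)" for xs R
      proof -
        assume a: "set xs \<subseteq> dom (restr C S)" "length xs = fst \<sigma> R" "rel (restr C S) R xs"
        have m: "set (map ?i xs) \<subseteq> dom B" "map e (map ?i xs) = xs" using mp a by auto
        show ?thesis using embD(3)[OF e m(1)] a m by simp
      qed
    qed
    show "inj_on ?i (dom (restr C S))" using S by (simp add: inj_on_inv_into)
    show "set xs \<subseteq> dom (restr C S) \<Longrightarrow> length xs = fst \<sigma> R \<Longrightarrow> rel B R (map ?i xs) \<Longrightarrow>
        rel (restr C S) R xs" for xs R
    proof -
      assume a: "set xs \<subseteq> dom (restr C S)" "length xs = fst \<sigma> R" "rel B R (map ?i xs)"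
      have m: "set (map ?i xs) \<subseteq> dom B" "map e (map ?i xs) = xs" using mp a by auto
      show ?thesis using homD(3)[OF embD(1)[OF e] m(1)] a m by simp
    qed
  qed
qed

lemma iso_inv:
  assumes i: "iso \<sigma> f A B" and w: "wf_struc \<sigma> A" and wB: "wf_struc \<sigma> B"
  shows "iso \<sigma> (inv_into (dom A) f) B A"
proof -
  have e: "emb \<sigma> f A B" and im: "f ` dom A = dom B" using i unfolding iso_def by auto
  have "emb \<sigma> (inv_into (dom A) f) (restr B (dom B)) A" using emb_inv_restr[OF e w] im by simp
  moreover have "substr \<sigma> B (restr B (dom B))"
    unfolding substr_def emb_def hom_def using wB wf_restr[OF wB wf_closed_dom[OF wB]]
    by (auto simp: wf_struc_def)
  ultimately have "emb \<sigma> (inv_into (dom A) f) B A" using emb_substr_down by blast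
  moreover have "inv_into (dom A) f ` dom B = dom A" using im embD(2)[OF e]
    by (metis inv_into_image_cancel order_refl)
  ultimately show ?thesis unfolding iso_def by blast
qed

lemma iso_comp: "iso \<sigma> f A B \<Longrightarrow> iso \<sigma> g B C \<Longrightarrow> iso \<sigma> (\<lambda>x. g (f x)) A C"
  unfolding iso_def using emb_comp by (metis image_image)

lemma iso_id: "wf_struc \<sigma> A \<Longrightarrow> iso \<sigma> (\<lambda>x. x) A A"
  unfolding iso_def emb_def hom_def by auto

lemma substr_refl: "wf_struc \<sigma> A \<Longrightarrow> substr \<sigma> A A"
  unfolding substr_def using iso_id iso_def by blast

lemma substr_trans: "substr \<sigma> A B \<Longrightarrow> substr \<sigma> B C \<Longrightarrow> substr \<sigma> A C"
  unfolding substr_def using emb_comp[of \<sigma> "\<lambda>x. x" A B "\<lambda>x. x" C] by auto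


lemma hom_agree_genset:
  assumes w: "wf_struc \<sigma> A" and X: "X \<subseteq> dom A" and h1: "hom \<sigma> k1 A E" and h2: "hom \<sigma> k2 A E"
    and eq: "\<forall>x\<in>X. k1 x = k2 x"
  shows "\<forall>x\<in>genset \<sigma> A X. k1 x = k2 x"
proof -
  let ?S = "{x\<in>dom A. k1 x = k2 x}"
  have "closedin \<sigma> A ?S"
    unfolding closedin_def
  proof (intro conjI allI impI)
    show "?S \<subseteq> dom A" by auto
    fix F xs assume a: "set xs \<subseteq> ?S \<and> length xs = snd \<sigma> F"
    have d: "set xs \<subseteq> dom A" using a by auto
    have m: "map k1 xs = map k2 xs" using a by (induct xs) auto
    show "fn A F xs \<in> ?S" using wf_fn[OF w d] a homD(2)[OF h1 d] homD(2)[OF h2 d] m by auto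
  qed
  hence "genset \<sigma> A X \<subseteq> ?S" using genset_least X eq by blast
  thus ?thesis by auto
qed

lemma hom_image_closed:
  assumes h: "hom \<sigma> f A B" and c: "closedin \<sigma> A G"
  shows "closedin \<sigma> B (f ` G)"
  unfolding closedin_def
proof (intro conjI allI impI)
  show "f ` G \<subseteq> dom B" using c homD(1)[OF h] unfolding closedin_def by auto
  fix F ys assume a: "set ys \<subseteq> f ` G \<and> length ys = snd \<sigma> F"
  then obtain xs where xs: "set xs \<subseteq> G" "ys = map f xs" using set_sub_image_map by blast
  have d: "set xs \<subseteq> dom A" using xs c unfolding closedin_def by auto
  have "fn A F xs \<in> G" using c xs a unfolding closedin_def by auto
  moreover have "fn B F ys = f (fn A F xs)" using homD(2)[OF h d, of F] xs a by simp
  ultimately show "fn B F ys \<in> f ` G" by simp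
qed

lemma hom_image_genset:
  assumes wA: "wf_struc \<sigma> A" and wB: "wf_struc \<sigma> B" and X: "X \<subseteq> dom A" and h: "hom \<sigma> f A B"
  shows "f ` genset \<sigma> A X = genset \<sigma> B (f ` X)"
proof
  have fX: "f ` X \<subseteq> dom B" using X homD(1)[OF h] by auto
  let ?S = "{x\<in>dom A. f x \<in> genset \<sigma> B (f ` X)}"
  have "closedin \<sigma> A ?S"
    unfolding closedin_def
  proof (intro conjI allI impI)
    show "?S \<subseteq> dom A" by auto
    fix F xs assume a: "set xs \<subseteq> ?S \<and> length xs = snd \<sigma> F"
    have d: "set xs \<subseteq> dom A" using a by auto
    have "set (map f xs) \<subseteq> genset \<sigma> B (f ` X)" using a by auto
    hence "fn B F (map f xs) \<in> genset \<sigma> B (f ` X)" using genset_fn[OF wB fX] a by auto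
    thus "fn A F xs \<in> ?S" using wf_fn[OF wA d] a homD(2)[OF h d] by auto
  qed
  moreover have "X \<subseteq> ?S"
  proof
    fix x assume "x \<in> X"
    moreover have "f ` X \<subseteq> genset \<sigma> B (f ` X)" by (rule genset_incl)
    ultimately show "x \<in> ?S" using X by auto
  qed
  ultimately have "genset \<sigma> A X \<subseteq> ?S" using genset_least by blast
  thus "f ` genset \<sigma> A X \<subseteq> genset \<sigma> B (f ` X)" by auto
  have "closedin \<sigma> B (f ` genset \<sigma> A X)" using hom_image_closed[OF h genset_closed[OF wA X]] .
  thus "genset \<sigma> B (f ` X) \<subseteq> f ` genset \<sigma> A X" by (rule genset_least[OF _ image_mono[OF genset_incl]])
qed

lemma genset_substr:
  assumes s: "substr \<sigma> B A" and Y: "Y \<subseteq> dom B"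
  shows "genset \<sigma> B Y = genset \<sigma> A Y"
proof
  have wA: "wf_struc \<sigma> A" and wB: "wf_struc \<sigma> B" using s unfolding substr_def by auto
  have "closedin \<sigma> A (genset \<sigma> B Y)"
    using genset_closed[OF wB Y] substr_fn[OF s] substr_closed[OF s] unfolding closedin_def
    by (metis (no_types, lifting) subset_trans)
  thus "genset \<sigma> A Y \<subseteq> genset \<sigma> B Y" by (rule genset_least[OF _ genset_incl])
  have "closedin \<sigma> B (genset \<sigma> A Y)"
  proof -
    have "genset \<sigma> A Y \<subseteq> dom B" using genset_least[OF substr_closed[OF s] Y] .
    thus ?thesis using genset_closed[OF wA] Y s substr_fn[OF s] unfolding closedin_def substr_def
      by (metis (no_types, lifting) subset_trans)
  qed
  thus "genset \<sigma> B Y \<subseteq> genset \<sigma> A Y" by (rule genset_least[OF _ genset_incl])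
qed

lemma age_fin_gen: "is_age \<sigma> K \<Longrightarrow> A \<in> K \<Longrightarrow> fin_gen \<sigma> A"
  unfolding is_age_def by blast

lemma age_wf: "is_age \<sigma> K \<Longrightarrow> A \<in> K \<Longrightarrow> wf_struc \<sigma> A"
  using age_fin_gen fin_gen_def by blast

lemma age_substr: "is_age \<sigma> K \<Longrightarrow> A \<in> K \<Longrightarrow> substr \<sigma> B A \<Longrightarrow> fin_gen \<sigma> B \<Longrightarrow> B \<in> K"
proof -
  assume K: "is_age \<sigma> K" and A: "A \<in> K" and s: "substr \<sigma> B A" and f: "fin_gen \<sigma> B"
  have w: "wf_struc \<sigma> B" using f fin_gen_def by blast
  have "isomorphic \<sigma> B B" using iso_id[OF w] isomorphic_def by blast
  thus ?thesis using K A s f w unfolding is_age_def by blast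
qed

lemma age_iso: "is_age \<sigma> K \<Longrightarrow> A \<in> K \<Longrightarrow> wf_struc \<sigma> B \<Longrightarrow> iso \<sigma> f B A \<Longrightarrow> B \<in> K"
proof -
  assume K: "is_age \<sigma> K" and A: "A \<in> K" and w: "wf_struc \<sigma> B" and i: "iso \<sigma> f B A"
  have "substr \<sigma> A A" using substr_refl age_wf[OF K A] by blast
  moreover have "isomorphic \<sigma> B A" using i isomorphic_def by blast
  ultimately show ?thesis using K A w age_fin_gen[OF K A] unfolding is_age_def by blast
qed

lemma cl_wf: "U \<in> cl \<sigma> K \<Longrightarrow> wf_struc \<sigma> U"
  unfolding cl_def by blast

lemma cl_mem: "is_age \<sigma> K \<Longrightarrow> U \<in> cl \<sigma> K \<Longrightarrow> substr \<sigma> B U \<Longrightarrow> fin_gen \<sigma> B \<Longrightarrow> B \<in> K"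
proof -
  assume K: "is_age \<sigma> K" and U: "U \<in> cl \<sigma> K" and s: "substr \<sigma> B U" and f: "fin_gen \<sigma> B"
  obtain C h where C: "C \<in> K" "iso \<sigma> h B C" using U s f unfolding cl_def isomorphic_def by blast
  show ?thesis using age_iso[OF K C(1) _ C(2)] f fin_gen_def by blast
qed

lemma age_sub_cl: "is_age \<sigma> K \<Longrightarrow> A \<in> K \<Longrightarrow> A \<in> cl \<sigma> K"
proof -
  assume K: "is_age \<sigma> K" and A: "A \<in> K"
  { fix B assume "substr \<sigma> B A" "fin_gen \<sigma> B"
    hence "B \<in> K" using age_substr[OF K A] by blast
    moreover have "isomorphic \<sigma> B B" using iso_id \<open>fin_gen \<sigma> B\<close> fin_gen_def isomorphic_def by blast
    ultimately have "\<exists>C\<in>K. isomorphic \<sigma> B C" by blast }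
  thus ?thesis unfolding cl_def using age_wf[OF K A] by blast
qed

lemma genstr_in: "is_age \<sigma> K \<Longrightarrow> U \<in> cl \<sigma> K \<Longrightarrow> finite X \<Longrightarrow> X \<subseteq> dom U \<Longrightarrow> genstr \<sigma> U X \<in> K"
  using cl_mem substr_genstr fin_gen_genstr cl_wf by blast

lemma gens_of: "is_age \<sigma> K \<Longrightarrow> A \<in> K \<Longrightarrow> \<exists>xs. set xs \<subseteq> dom A \<and> genset \<sigma> A (set xs) = dom A"
  using age_fin_gen fin_gen_D finite_list by metis

lemma zero_iso:
  assumes K: "is_age \<sigma> K" and wA: "wf_struc \<sigma> A" and wB: "wf_struc \<sigma> B"
    and GA: "genstr \<sigma> A {} \<in> K" and GB: "genstr \<sigma> B {} \<in> K"
  shows "\<exists>f. iso \<sigma> f (genstr \<sigma> A {}) (genstr \<sigma> B {})"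
proof -
  obtain D a b where D: "D \<in> K" "emb \<sigma> a (genstr \<sigma> A {}) D" "emb \<sigma> b (genstr \<sigma> B {}) D"
    using K GA GB unfolding is_age_def by blast
  have wD: "wf_struc \<sigma> D" using age_wf[OF K D(1)] .
  have wGA: "wf_struc \<sigma> (genstr \<sigma> A {})" using wf_genstr[OF wA] by simp
  have wGB: "wf_struc \<sigma> (genstr \<sigma> B {})" using wf_genstr[OF wB] by simp
  have eA: "genset \<sigma> (genstr \<sigma> A {}) {} = genset \<sigma> A {}"
    using genset_substr[OF substr_genstr[OF wA]] by simp
  have eB: "genset \<sigma> (genstr \<sigma> B {}) {} = genset \<sigma> B {}"
    using genset_substr[OF substr_genstr[OF wB]] by simp
  have ia: "a ` genset \<sigma> A {} = genset \<sigma> D {}"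
    using hom_image_genset[OF wGA wD _ embD(1)[OF D(2)], of "{}"] eA by simp
  have ib: "b ` genset \<sigma> B {} = genset \<sigma> D {}"
    using hom_image_genset[OF wGB wD _ embD(1)[OF D(3)], of "{}"] eB by simp
  let ?S = "genset \<sigma> D {}"
  have cS: "closedin \<sigma> D ?S" using genset_closed[OF wD] by simp
  have a1: "emb \<sigma> a (genstr \<sigma> A {}) (restr D ?S)"
    using emb_into_substr[OF D(2) substr_restr[OF wD cS] _ wGA] ia by simp
  have b1: "emb \<sigma> (inv_into (genset \<sigma> B {}) b) (restr D ?S) (genstr \<sigma> B {})"
    using emb_inv_restr[OF D(3) wGB] ib by simp
  have "emb \<sigma> (\<lambda>x. inv_into (genset \<sigma> B {}) b (a x)) (genstr \<sigma> A {}) (genstr \<sigma> B {})"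
    using emb_comp[OF a1 b1] .
  moreover have "(\<lambda>x. inv_into (genset \<sigma> B {}) b (a x)) ` genset \<sigma> A {} = genset \<sigma> B {}"
  proof -
    have "(\<lambda>x. inv_into (genset \<sigma> B {}) b (a x)) ` genset \<sigma> A {} = inv_into (genset \<sigma> B {}) b ` ?S"
      using ia by (metis image_image)
    also have "\<dots> = genset \<sigma> B {}" using ib embD(2)[OF D(3)]
      by (metis genstr_simps(1) inv_into_image_cancel order_refl)
    finally show ?thesis .
  qed
  ultimately show ?thesis unfolding iso_def by auto
qed


definition EP :: "('r,'f) sig \<Rightarrow> ('r,'f) struc set \<Rightarrow> ('r,'f) struc \<Rightarrow> ('r,'f) struc \<Rightarrow> (nat \<Rightarrow> nat) \<Rightarrow> bool" where
  "EP \<sigma> C T U u \<longleftrightarrow> (\<forall>A\<in>C. \<forall>B\<in>C. \<forall>a f g. emb \<sigma> a A U \<and> emb \<sigma> f A B \<and> hom \<sigma> g B T \<and>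
     (\<forall>x\<in>dom A. g (f x) = u (a x)) \<longrightarrow>
     (\<exists>e. emb \<sigma> e B U \<and> (\<forall>x\<in>dom A. e (f x) = a x) \<and> (\<forall>y\<in>dom B. u (e y) = g y)))"

lemma EPD: "EP \<sigma> C T U u \<Longrightarrow> A \<in> C \<Longrightarrow> B \<in> C \<Longrightarrow> emb \<sigma> a A U \<Longrightarrow> emb \<sigma> f A B \<Longrightarrow> hom \<sigma> g B T \<Longrightarrow>
     (\<forall>x\<in>dom A. g (f x) = u (a x)) \<Longrightarrow>
     (\<exists>e. emb \<sigma> e B U \<and> (\<forall>x\<in>dom A. e (f x) = a x) \<and> (\<forall>y\<in>dom B. u (e y) = g y))"
  unfolding EP_def by blast

definition pinv :: "('r,'f) sig \<Rightarrow> ('r,'f) struc \<Rightarrow> ('r,'f) struc \<Rightarrow> (nat \<Rightarrow> nat) \<Rightarrow> (nat \<Rightarrow> nat) \<Rightarrow>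
   nat set \<Rightarrow> (nat \<Rightarrow> nat) \<Rightarrow> bool" where
  "pinv \<sigma> U1 U2 u1 u2 X h \<longleftrightarrow> finite X \<and> X \<subseteq> dom U1 \<and> emb \<sigma> h (genstr \<sigma> U1 X) U2 \<and>
     (\<forall>x\<in>genset \<sigma> U1 X. u2 (h x) = u1 x)"

lemma forth_step:
  assumes K: "is_age \<sigma> C" and E: "EP \<sigma> C T U2 u2" and U1: "U1 \<in> cl \<sigma> C" and hu1: "hom \<sigma> u1 U1 T"
    and P: "pinv \<sigma> U1 U2 u1 u2 X h" and x0: "x0 \<in> dom U1"
  shows "\<exists>h'. pinv \<sigma> U1 U2 u1 u2 (insert x0 X) h' \<and> (\<forall>x\<in>genset \<sigma> U1 X. h' x = h x)"
proof -
  have w: "wf_struc \<sigma> U1" using cl_wf[OF U1] .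
  have X: "finite X" "X \<subseteq> dom U1" and eh: "emb \<sigma> h (genstr \<sigma> U1 X) U2"
    and c: "\<forall>x\<in>genset \<sigma> U1 X. u2 (h x) = u1 x" using P unfolding pinv_def by auto
  have X': "finite (insert x0 X)" "insert x0 X \<subseteq> dom U1" using X x0 by auto
  have A: "genstr \<sigma> U1 X \<in> C" using genstr_in[OF K U1 X] .
  have B: "genstr \<sigma> U1 (insert x0 X) \<in> C" using genstr_in[OF K U1 X'] .
  have sB: "substr \<sigma> (genstr \<sigma> U1 (insert x0 X)) U1" using substr_genstr[OF w X'(2)] .
  have f: "emb \<sigma> (\<lambda>x. x) (genstr \<sigma> U1 X) (genstr \<sigma> U1 (insert x0 X))"
    using emb_into_substr[OF emb_id_substr[OF substr_genstr[OF w X(2)]] sB] genset_mono[OF w X'(2), of X]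
      wf_genstr[OF w X(2)] by auto
  have g: "hom \<sigma> u1 (genstr \<sigma> U1 (insert x0 X)) T" using hom_substr_down[OF sB hu1] .
  obtain e where e: "emb \<sigma> e (genstr \<sigma> U1 (insert x0 X)) U2" "\<forall>x\<in>genset \<sigma> U1 X. e x = h x"
    "\<forall>y\<in>genset \<sigma> U1 (insert x0 X). u2 (e y) = u1 y"
    using EPD[OF E A B eh f g] c by auto
  show ?thesis using e X' unfolding pinv_def by blast
qed

lemma back_step:
  assumes K: "is_age \<sigma> C" and E: "EP \<sigma> C T U1 u1" and U1: "U1 \<in> cl \<sigma> C" and U2: "U2 \<in> cl \<sigma> C"
    and hu2: "hom \<sigma> u2 U2 T"
    and P: "pinv \<sigma> U1 U2 u1 u2 X h" and y: "y \<in> dom U2"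
  shows "\<exists>X' h'. pinv \<sigma> U1 U2 u1 u2 X' h' \<and> X \<subseteq> X' \<and> (\<forall>x\<in>genset \<sigma> U1 X. h' x = h x) \<and>
     y \<in> h' ` genset \<sigma> U1 X'"
proof -
  have w1: "wf_struc \<sigma> U1" using cl_wf[OF U1] .
  have w2: "wf_struc \<sigma> U2" using cl_wf[OF U2] .
  have X: "finite X" "X \<subseteq> dom U1" and eh: "emb \<sigma> h (genstr \<sigma> U1 X) U2"
    and c: "\<forall>x\<in>genset \<sigma> U1 X. u2 (h x) = u1 x" using P unfolding pinv_def by auto
  let ?A = "genstr \<sigma> U1 X"
  have wA: "wf_struc \<sigma> ?A" using wf_genstr[OF w1 X(2)] .
  have sA: "substr \<sigma> ?A U1" using substr_genstr[OF w1 X(2)] .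
  have A: "?A \<in> C" using genstr_in[OF K U1 X] .
  have XgA: "X \<subseteq> dom ?A" using genset_incl by simp
  have gA: "genset \<sigma> ?A X = genset \<sigma> U1 X" using genset_substr[OF sA XgA] by simp
  have hX: "h ` X \<subseteq> dom U2" using homD(1)[OF embD(1)[OF eh]] XgA by auto
  let ?Y = "insert y (h ` X)"
  have Y: "finite ?Y" "?Y \<subseteq> dom U2" using X hX y by auto
  let ?B = "genstr \<sigma> U2 ?Y"
  have wB: "wf_struc \<sigma> ?B" using wf_genstr[OF w2 Y(2)] .
  have sB: "substr \<sigma> ?B U2" using substr_genstr[OF w2 Y(2)] .
  have B: "?B \<in> C" using genstr_in[OF K U2 Y] .
  have imh: "h ` genset \<sigma> U1 X \<subseteq> genset \<sigma> U2 ?Y"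
  proof -
    have "h ` genset \<sigma> ?A X = genset \<sigma> U2 (h ` X)"
      using hom_image_genset[OF wA w2 XgA embD(1)[OF eh]] .
    also have "\<dots> \<subseteq> genset \<sigma> U2 ?Y" using genset_mono[OF w2 Y(2)] by blast
    finally show ?thesis using gA by simp
  qed
  have f: "emb \<sigma> h ?A ?B" using emb_into_substr[OF eh sB _ wA] imh by simp
  have a: "emb \<sigma> (\<lambda>x. x) ?A U1" using emb_id_substr[OF sA] .
  have g: "hom \<sigma> u2 ?B T" using hom_substr_down[OF sB hu2] .
  obtain e where e: "emb \<sigma> e ?B U1" "\<forall>x\<in>genset \<sigma> U1 X. e (h x) = x"
    "\<forall>z\<in>genset \<sigma> U2 ?Y. u1 (e z) = u2 z"
    using EPD[OF E A B a f g] c by auto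
  have inj: "inj_on e (genset \<sigma> U2 ?Y)" using embD(2)[OF e(1)] by simp
  have yY: "y \<in> genset \<sigma> U2 ?Y" by (rule subsetD[OF genset_incl]) simp
  have ey: "e y \<in> dom U1" using homD(1)[OF embD(1)[OF e(1)], of y] yY by simp
  let ?X' = "insert (e y) X"
  have X': "finite ?X'" "?X' \<subseteq> dom U1" using X ey by auto
  let ?h' = "inv_into (genset \<sigma> U2 ?Y) e"
  have cl: "closedin \<sigma> U1 (e ` genset \<sigma> U2 ?Y)"
    using hom_image_closed[OF embD(1)[OF e(1)] wf_closed_dom[OF wB]] by simp
  have sub: "genset \<sigma> U1 ?X' \<subseteq> e ` genset \<sigma> U2 ?Y"
  proof (rule genset_least[OF cl])
    show "?X' \<subseteq> e ` genset \<sigma> U2 ?Y"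
    proof
      fix z assume "z \<in> ?X'"
      then consider "z = e y" | "z \<in> X" by auto
      then show "z \<in> e ` genset \<sigma> U2 ?Y"
      proof cases
        case 1 then show ?thesis using yY by simp
      next
        case 2
        then have zg: "z \<in> genset \<sigma> U1 X" by (rule subsetD[OF genset_incl])
        then have "h z \<in> genset \<sigma> U2 ?Y" "e (h z) = z" using imh e(2) by auto
        then show ?thesis by (metis image_eqI)
      qed
    qed
  qed
  have eh': "emb \<sigma> ?h' (genstr \<sigma> U1 ?X') U2"
    using emb_substr_up[OF emb_inv_restr[OF e(1) wB, of "genset \<sigma> U1 ?X'"] sB] sub
    by (simp add: genstr_def)
  have agree: "\<forall>x\<in>genset \<sigma> U1 X. ?h' x = h x"
  proof
    fix x assume x: "x \<in> genset \<sigma> U1 X"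
    hence "h x \<in> genset \<sigma> U2 ?Y" "e (h x) = x" using imh e(2) by auto
    thus "?h' x = h x" using inj by (simp add: inv_into_f_eq)
  qed
  have comp: "\<forall>z\<in>genset \<sigma> U1 ?X'. u2 (?h' z) = u1 z"
  proof
    fix z assume "z \<in> genset \<sigma> U1 ?X'"
    hence z: "z \<in> e ` genset \<sigma> U2 ?Y" using sub by auto
    hence "?h' z \<in> genset \<sigma> U2 ?Y" "e (?h' z) = z" by (auto simp: inv_into_into f_inv_into_f)
    thus "u2 (?h' z) = u1 z" using e(3) by metis
  qed
  have yin: "y \<in> ?h' ` genset \<sigma> U1 ?X'"
  proof -
    have "?h' (e y) = y" using inj yY by (simp add: inv_into_f_f)
    moreover have "e y \<in> genset \<sigma> U1 ?X'" by (rule subsetD[OF genset_incl]) simp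
    ultimately show ?thesis by (metis image_eqI)
  qed
  show ?thesis using X' eh' agree comp yin unfolding pinv_def by blast
qed

lemma dep_choice:
  assumes "I 0 s0" and "\<And>n s. I n s \<Longrightarrow> \<exists>s'. I (Suc n) s' \<and> R n s s'"
  shows "\<exists>st. st 0 = s0 \<and> (\<forall>n. I n (st n) \<and> R n (st n) (st (Suc n)))"
proof -
  define st where "st = rec_nat s0 (\<lambda>n s. SOME s'. I (Suc n) s' \<and> R n s s')"
  have S: "st (Suc n) = (SOME s'. I (Suc n) s' \<and> R n (st n) s')" for n by (simp add: st_def)
  have I: "I n (st n)" for n
  proof (induct n)
    case 0 then show ?case using assms(1) by (simp add: st_def)
  next
    case (Suc n) then show ?case using someI_ex[OF assms(2)[OF Suc]] S by simp
  qed
  have R: "R n (st n) (st (Suc n))" for n using someI_ex[OF assms(2)[OF I[of n]]] S by simp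
  have "st 0 = s0" by (simp add: st_def)
  thus ?thesis using I R by blast
qed

lemma finite_in_mono_union:
  fixes G :: "nat \<Rightarrow> 'a set"
  assumes mono: "\<And>n m. n \<le> m \<Longrightarrow> G n \<subseteq> G m" and fin: "finite S" and S: "\<forall>x\<in>S. \<exists>n. x \<in> G n"
  shows "\<exists>N. S \<subseteq> G N"
  using fin S
proof (induct S rule: finite_induct)
  case empty then show ?case by auto
next
  case (insert x F)
  then obtain N where N: "F \<subseteq> G N" by auto
  obtain n where n: "x \<in> G n" using insert by auto
  have m1: "G N \<subseteq> G (max N n)" by (rule mono) simp
  have m2: "G n \<subseteq> G (max N n)" by (rule mono) simp
  note m = m1 m2
  have "F \<subseteq> G (max N n)" "x \<in> G (max N n)" using N n m by auto
  thus ?case by blast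
qed


lemma chain_limit:
  assumes w1: "wf_struc \<sigma> U1"
    and P: "\<And>n. pinv \<sigma> U1 U2 u1 u2 (X n) (h n)"
    and mono: "\<And>n. X n \<subseteq> X (Suc n)"
    and ag: "\<And>n. \<forall>x\<in>genset \<sigma> U1 (X n). h (Suc n) x = h n x"
    and cov: "\<forall>x\<in>dom U1. \<exists>n. x \<in> genset \<sigma> U1 (X n)"
  shows "\<exists>H. emb \<sigma> H U1 U2 \<and> (\<forall>n. \<forall>x\<in>genset \<sigma> U1 (X n). H x = h n x) \<and>
     (\<forall>x\<in>dom U1. u2 (H x) = u1 x)"
proof -
  define G where "G n = genset \<sigma> U1 (X n)" for n
  have Xd: "X n \<subseteq> dom U1" for n using P unfolding pinv_def by blast
  have eh: "emb \<sigma> (h n) (genstr \<sigma> U1 (X n)) U2" for n using P unfolding pinv_def by blast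
  have Xm: "n \<le> m \<Longrightarrow> X n \<subseteq> X m" for n m
    using lift_Suc_mono_le[of X, OF mono] by blast
  have Gm: "n \<le> m \<Longrightarrow> G n \<subseteq> G m" for n m
    unfolding G_def using genset_mono[OF w1 Xd Xm] by blast
  have agm: "n \<le> m \<Longrightarrow> \<forall>x\<in>G n. h m x = h n x" for n m
  proof (induct m rule: dec_induct)
    case base then show ?case by simp
  next
    case (step m)
    then show ?case using ag[of m] Gm[of n m] unfolding G_def by auto
  qed
  define H where "H x = h (LEAST n. x \<in> G n) x" for x
  have HG: "x \<in> G n \<Longrightarrow> H x = h n x" for x n
  proof -
    assume x: "x \<in> G n"
    let ?k = "LEAST n. x \<in> G n"
    have "?k \<le> n" "x \<in> G ?k" using x by (auto intro: Least_le LeastI)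
    thus ?thesis using agm[of ?k n] unfolding H_def by auto
  qed
  have GD: "G n \<subseteq> dom U1" for n unfolding G_def using genset_sub_dom[OF w1 Xd] .
  have cov': "\<forall>x\<in>dom U1. \<exists>n. x \<in> G n" using cov unfolding G_def .
  have fin: "set xs \<subseteq> dom U1 \<Longrightarrow> \<exists>N. set xs \<subseteq> G N" for xs
    using finite_in_mono_union[of G "set xs", OF Gm] cov' by auto
  have hG: "x \<in> G n \<Longrightarrow> h n x \<in> dom U2" for x n
    using homD(1)[OF embD(1)[OF eh[of n]]] unfolding G_def by simp
  have mapH: "set xs \<subseteq> G N \<Longrightarrow> map H xs = map (h N) xs" for xs N
    using HG by (induct xs) auto
  have hom: "hom \<sigma> H U1 U2"
  proof (rule homI)
    show "x \<in> dom U1 \<Longrightarrow> H x \<in> dom U2" for x using cov' HG hG by metis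
    show "set xs \<subseteq> dom U1 \<Longrightarrow> length xs = snd \<sigma> F \<Longrightarrow> H (fn U1 F xs) = fn U2 F (map H xs)" for xs F
    proof -
      assume a: "set xs \<subseteq> dom U1" "length xs = snd \<sigma> F"
      obtain N where N: "set xs \<subseteq> G N" using fin a by blast
      have "fn U1 F xs \<in> G N" using genset_fn[OF w1 Xd] N a unfolding G_def by blast
      hence "H (fn U1 F xs) = h N (fn U1 F xs)" using HG by blast
      also have "\<dots> = fn U2 F (map (h N) xs)"
        using homD(2)[OF embD(1)[OF eh[of N]], of xs F] N a unfolding G_def by simp
      finally show ?thesis using mapH[OF N] by metis
    qed
    show "set xs \<subseteq> dom U1 \<Longrightarrow> length xs = fst \<sigma> R \<Longrightarrow> rel U1 R xs \<Longrightarrow> rel U2 R (map H xs)" for xs R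
    proof -
      assume a: "set xs \<subseteq> dom U1" "length xs = fst \<sigma> R" "rel U1 R xs"
      obtain N where N: "set xs \<subseteq> G N" using fin a by blast
      have "rel U2 R (map (h N) xs)"
        using homD(3)[OF embD(1)[OF eh[of N]], of xs R] N a unfolding G_def by simp
      thus ?thesis using mapH[OF N] by metis
    qed
  qed
  have emb: "emb \<sigma> H U1 U2"
  proof (rule embI[OF hom])
    show "inj_on H (dom U1)"
    proof (rule inj_onI)
      fix x y assume xy: "x \<in> dom U1" "y \<in> dom U1" "H x = H y"
      obtain N where N: "set [x,y] \<subseteq> G N" using fin[of "[x,y]"] xy by auto
      hence "h N x = h N y" using xy HG by auto
      thus "x = y" using embD(2)[OF eh[of N]] N unfolding G_def by (auto dest: inj_onD)
    qed
    show "set xs \<subseteq> dom U1 \<Longrightarrow> length xs = fst \<sigma> R \<Longrightarrow> rel U2 R (map H xs) \<Longrightarrow> rel U1 R xs" for xs R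
    proof -
      assume a: "set xs \<subseteq> dom U1" "length xs = fst \<sigma> R" "rel U2 R (map H xs)"
      obtain N where N: "set xs \<subseteq> G N" using fin a by blast
      have "rel U2 R (map (h N) xs)" using a mapH[OF N] by metis
      thus ?thesis using embD(3)[OF eh[of N], of xs R] N a unfolding G_def by simp
    qed
  qed
  have comp: "\<forall>x\<in>dom U1. u2 (H x) = u1 x"
  proof
    fix x assume "x \<in> dom U1"
    then obtain n where "x \<in> G n" using cov' by blast
    thus "u2 (H x) = u1 x" using HG P[of n] unfolding pinv_def G_def by auto
  qed
  show ?thesis using emb comp HG unfolding G_def by blast
qed

lemma base_pinv:
  assumes K: "is_age \<sigma> C" and U1: "U1 \<in> cl \<sigma> C" and U2: "U2 \<in> cl \<sigma> C"
    and h1: "hom \<sigma> u1 U1 T" and h2: "hom \<sigma> u2 U2 T"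
  shows "\<exists>p. pinv \<sigma> U1 U2 u1 u2 {} p"
proof -
  have w1: "wf_struc \<sigma> U1" and w2: "wf_struc \<sigma> U2" using cl_wf[OF U1] cl_wf[OF U2] by auto
  have G1: "genstr \<sigma> U1 {} \<in> C" and G2: "genstr \<sigma> U2 {} \<in> C" using genstr_in[OF K U1] genstr_in[OF K U2] by auto

  obtain \<phi> where phi: "iso \<sigma> \<phi> (genstr \<sigma> U1 {}) (genstr \<sigma> U2 {})" using zero_iso[OF K w1 w2 G1 G2] by blast
  have s1: "substr \<sigma> (genstr \<sigma> U1 {}) U1" and s2: "substr \<sigma> (genstr \<sigma> U2 {}) U2"
    using substr_genstr[OF w1] substr_genstr[OF w2] by auto
  have e: "emb \<sigma> \<phi> (genstr \<sigma> U1 {}) U2" using emb_substr_up[OF _ s2] phi unfolding iso_def by blast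
  have wG: "wf_struc \<sigma> (genstr \<sigma> U1 {})" using wf_genstr[OF w1] by simp
  have "\<forall>x\<in>genset \<sigma> (genstr \<sigma> U1 {}) {}. u2 (\<phi> x) = u1 x"
    using hom_agree_genset[OF wG _ hom_comp[OF embD(1)[OF e] h2] hom_substr_down[OF s1 h1], of "{}"] by simp
  moreover have "genset \<sigma> (genstr \<sigma> U1 {}) {} = genset \<sigma> U1 {}" using genset_substr[OF s1] by simp
  ultimately show ?thesis using e unfolding pinv_def by auto
qed

lemma EP_universal:
  assumes K: "is_age \<sigma> C" and E: "EP \<sigma> C T U u" and U: "U \<in> cl \<sigma> C" and hu: "hom \<sigma> u U T"
    and A: "A \<in> cl \<sigma> C" and h: "hom \<sigma> h A T"
  shows "\<exists>\<iota>. emb \<sigma> \<iota> A U \<and> (\<forall>x\<in>dom A. h x = u (\<iota> x))"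
proof -
  have wA: "wf_struc \<sigma> A" using cl_wf[OF A] .
  obtain p where p: "pinv \<sigma> A U h u {} p" using base_pinv[OF K A U h hu] by blast
  let ?I = "\<lambda>n s. pinv \<sigma> A U h u (fst s) (snd s)"
  let ?R = "\<lambda>n s s'. fst s \<subseteq> fst s' \<and> (\<forall>x\<in>genset \<sigma> A (fst s). snd s' x = snd s x) \<and>
     (n \<in> dom A \<longrightarrow> n \<in> fst s')"
  have step: "\<exists>s'. ?I (Suc n) s' \<and> ?R n s s'" if I: "?I n s" for n s
  proof (cases "n \<in> dom A")
    case True
    obtain k' where "pinv \<sigma> A U h u (insert n (fst s)) k'" "\<forall>x\<in>genset \<sigma> A (fst s). k' x = snd s x"
      using forth_step[OF K E A h I True] by blast
    thus ?thesis by (intro exI[of _ "(insert n (fst s), k')"]) auto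
  next
    case False
    thus ?thesis using I by (intro exI[of _ s]) auto
  qed
  obtain st where st: "st 0 = ({}, p)" "\<And>n. ?I n (st n) \<and> ?R n (st n) (st (Suc n))"
    using dep_choice[of ?I "({}, p)" ?R] p step by auto
  have cov: "\<forall>x\<in>dom A. \<exists>n. x \<in> genset \<sigma> A (fst (st n))"
  proof
    fix x assume x: "x \<in> dom A"
    hence "x \<in> fst (st (Suc x))" using st(2)[of x] by blast
    thus "\<exists>n. x \<in> genset \<sigma> A (fst (st n))" using genset_incl by blast
  qed
  obtain H where H: "emb \<sigma> H A U" "\<forall>x\<in>dom A. u (H x) = h x"
    using chain_limit[of \<sigma> A U h u "\<lambda>n. fst (st n)" "\<lambda>n. snd (st n)", OF wA] st(2) cov by blast
  thus ?thesis by auto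
qed

lemma EP_bf:
  assumes K: "is_age \<sigma> C" and E1: "EP \<sigma> C T U1 u1" and E2: "EP \<sigma> C T U2 u2"
    and U1: "U1 \<in> cl \<sigma> C" and U2: "U2 \<in> cl \<sigma> C"
    and h1: "hom \<sigma> u1 U1 T" and h2: "hom \<sigma> u2 U2 T" and p: "pinv \<sigma> U1 U2 u1 u2 X0 p"
  shows "\<exists>H. iso \<sigma> H U1 U2 \<and> (\<forall>x\<in>dom U1. u2 (H x) = u1 x) \<and> (\<forall>x\<in>genset \<sigma> U1 X0. H x = p x)"
proof -
  have w1: "wf_struc \<sigma> U1" using cl_wf[OF U1] .
  let ?I = "\<lambda>n s. pinv \<sigma> U1 U2 u1 u2 (fst s) (snd s)"
  let ?R = "\<lambda>n s s'. fst s \<subseteq> fst s' \<and> (\<forall>x\<in>genset \<sigma> U1 (fst s). snd s' x = snd s x) \<and>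
     (n \<in> dom U1 \<longrightarrow> n \<in> fst s') \<and> (n \<in> dom U2 \<longrightarrow> n \<in> snd s' ` genset \<sigma> U1 (fst s'))"
  have step: "\<exists>s'. ?I (Suc n) s' \<and> ?R n s s'" if I: "?I n s" for n s
  proof -
    obtain X1 k1 where s1: "pinv \<sigma> U1 U2 u1 u2 X1 k1" "fst s \<subseteq> X1"
      "\<forall>x\<in>genset \<sigma> U1 (fst s). k1 x = snd s x" "n \<in> dom U1 \<longrightarrow> n \<in> X1"
    proof (cases "n \<in> dom U1")
      case True
      obtain k' where "pinv \<sigma> U1 U2 u1 u2 (insert n (fst s)) k'" "\<forall>x\<in>genset \<sigma> U1 (fst s). k' x = snd s x"
        using forth_step[OF K E2 U1 h1 I True] by blast
      thus ?thesis using that by blast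
    next
      case False
      thus ?thesis using that[of "fst s" "snd s"] I by blast
    qed
    obtain X2 k2 where s2: "pinv \<sigma> U1 U2 u1 u2 X2 k2" "X1 \<subseteq> X2"
      "\<forall>x\<in>genset \<sigma> U1 X1. k2 x = k1 x" "n \<in> dom U2 \<longrightarrow> n \<in> k2 ` genset \<sigma> U1 X2"
    proof (cases "n \<in> dom U2")
      case True
      obtain X' k' where "pinv \<sigma> U1 U2 u1 u2 X' k'" "X1 \<subseteq> X'" "\<forall>x\<in>genset \<sigma> U1 X1. k' x = k1 x"
        "n \<in> k' ` genset \<sigma> U1 X'"
        using back_step[OF K E1 U1 U2 h2 s1(1) True] by blast
      thus ?thesis using that by blast
    next
      case False
      thus ?thesis using that[of X1 k1] s1 by blast
    qed
    have X1d: "X1 \<subseteq> dom U1" using s1(1) unfolding pinv_def by blast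
    have "genset \<sigma> U1 (fst s) \<subseteq> genset \<sigma> U1 X1" using genset_mono[OF w1 X1d s1(2)] .
    hence "\<forall>x\<in>genset \<sigma> U1 (fst s). k2 x = snd s x" using s1(3) s2(3) by auto
    thus ?thesis using s1 s2 by (intro exI[of _ "(X2, k2)"]) auto
  qed
  obtain st where st: "st 0 = (X0, p)" "\<And>n. ?I n (st n) \<and> ?R n (st n) (st (Suc n))"
    using dep_choice[of ?I "(X0, p)" ?R] p step by auto
  have cov: "\<forall>x\<in>dom U1. \<exists>n. x \<in> genset \<sigma> U1 (fst (st n))"
  proof
    fix x assume x: "x \<in> dom U1"
    hence "x \<in> fst (st (Suc x))" using st(2)[of x] by blast
    thus "\<exists>n. x \<in> genset \<sigma> U1 (fst (st n))" using genset_incl by blast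
  qed
  obtain H where H: "emb \<sigma> H U1 U2" "\<forall>n. \<forall>x\<in>genset \<sigma> U1 (fst (st n)). H x = snd (st n) x"
    "\<forall>x\<in>dom U1. u2 (H x) = u1 x"
    using chain_limit[of \<sigma> U1 U2 u1 u2 "\<lambda>n. fst (st n)" "\<lambda>n. snd (st n)", OF w1] st(2) cov by blast
  have "dom U2 \<subseteq> H ` dom U1"
  proof
    fix y assume y: "y \<in> dom U2"
    then obtain z where z: "z \<in> genset \<sigma> U1 (fst (st (Suc y)))" "y = snd (st (Suc y)) z"
      using st(2)[of y] by blast
    have "fst (st (Suc y)) \<subseteq> dom U1" using st(2)[of "Suc y"] unfolding pinv_def by blast
    hence "z \<in> dom U1" using genset_sub_dom[OF w1] z(1) by blast
    moreover have "H z = y" using H(2) z by auto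
    ultimately show "y \<in> H ` dom U1" by blast
  qed
  moreover have "H ` dom U1 \<subseteq> dom U2" using homD(1)[OF embD(1)[OF H(1)]] by blast
  ultimately have "iso \<sigma> H U1 U2" using H(1) unfolding iso_def by blast
  moreover have "\<forall>x\<in>genset \<sigma> U1 X0. H x = p x" using H(2) st(1) by (metis fst_conv snd_conv)
  ultimately show ?thesis using H(3) by blast
qed


lemma substr_between: "substr \<sigma> B U \<Longrightarrow> substr \<sigma> M U \<Longrightarrow> dom B \<subseteq> dom M \<Longrightarrow> substr \<sigma> B M"
proof -
  assume a: "substr \<sigma> B U" "substr \<sigma> M U" "dom B \<subseteq> dom M"
  have w: "wf_struc \<sigma> B" "wf_struc \<sigma> M" using a unfolding substr_def by auto
  have "emb \<sigma> (\<lambda>x. x) B M" using emb_into_substr[OF emb_id_substr[OF a(1)] a(2) _ w(1)] a(3) by simp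
  thus ?thesis using w a(3) unfolding substr_def by blast
qed

lemma EP_homog:
  assumes K: "is_age \<sigma> C" and E: "EP \<sigma> C T U u" and U: "U \<in> cl \<sigma> C" and hu: "hom \<sigma> u U T"
  shows "homogeneous_hom \<sigma> u U T"
  unfolding homogeneous_hom_def
proof (intro conjI hu allI impI)
  fix A \<iota> assume a: "substr \<sigma> A U \<and> fin_gen \<sigma> A \<and> emb \<sigma> \<iota> A U \<and> (\<forall>x\<in>dom A. u (\<iota> x) = u x)"
  have w: "wf_struc \<sigma> U" using cl_wf[OF U] .
  have sA: "substr \<sigma> A U" and fg: "fin_gen \<sigma> A" and ei: "emb \<sigma> \<iota> A U"
    and ci: "\<forall>x\<in>dom A. u (\<iota> x) = u x" using a by auto
  obtain X0 where X0: "finite X0" "X0 \<subseteq> dom A" "genset \<sigma> A X0 = dom A" using fin_gen_D[OF fg] by blast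
  have XU: "X0 \<subseteq> dom U" using X0(2) sA unfolding substr_def by auto
  have g: "genset \<sigma> U X0 = dom A" using genset_substr[OF sA X0(2)] X0(3) by simp
  have "substr \<sigma> (genstr \<sigma> U X0) A" using substr_between[OF substr_genstr[OF w XU] sA] g by simp
  hence "emb \<sigma> \<iota> (genstr \<sigma> U X0) U" using emb_substr_down ei by blast
  hence "pinv \<sigma> U U u u X0 \<iota>" using X0(1) XU ci g unfolding pinv_def by auto
  then obtain H where "iso \<sigma> H U U" "\<forall>x\<in>dom U. u (H x) = u x" "\<forall>x\<in>genset \<sigma> U X0. H x = \<iota> x"
    using EP_bf[OF K E E U U hu hu] by blast
  thus "\<exists>\<alpha>. iso \<sigma> \<alpha> U U \<and> (\<forall>x\<in>dom U. u (\<alpha> x) = u x) \<and> (\<forall>x\<in>dom A. \<alpha> x = \<iota> x)" using g by auto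
qed

lemma univ_homog_EP:
  assumes K: "is_age \<sigma> C" and Un: "universal_within \<sigma> C u U T" and Ho: "homogeneous_hom \<sigma> u U T"
  shows "EP \<sigma> C T U u"
  unfolding EP_def
proof (intro ballI allI impI)
  fix A B a f g
  assume A: "A \<in> C" and B: "B \<in> C"
    and H: "emb \<sigma> a A U \<and> emb \<sigma> f A B \<and> hom \<sigma> g B T \<and> (\<forall>x\<in>dom A. g (f x) = u (a x))"
  have ea: "emb \<sigma> a A U" and ef: "emb \<sigma> f A B" and hg: "hom \<sigma> g B T"
    and c: "\<forall>x\<in>dom A. g (f x) = u (a x)" using H by auto
  have U: "U \<in> cl \<sigma> C" and hu: "hom \<sigma> u U T" using Un unfolding universal_within_def by auto
  have wU: "wf_struc \<sigma> U" using cl_wf[OF U] .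
  have wA: "wf_struc \<sigma> A" using age_wf[OF K A] .
  obtain \<iota> where io: "emb \<sigma> \<iota> B U" "\<forall>y\<in>dom B. g y = u (\<iota> y)"
    using Un age_sub_cl[OF K B] hg unfolding universal_within_def by blast
  obtain xs where xs: "set xs \<subseteq> dom A" "genset \<sigma> A (set xs) = dom A" using gens_of[OF K A] by blast
  let ?X = "a ` set xs"
  have Xd: "?X \<subseteq> dom U" using xs(1) homD(1)[OF embD(1)[OF ea]] by auto
  have dA0: "genset \<sigma> U ?X = a ` dom A"
    using hom_image_genset[OF wA wU xs(1) embD(1)[OF ea]] xs(2) by simp
  let ?A0 = "genstr \<sigma> U ?X"
  have sA0: "substr \<sigma> ?A0 U" using substr_genstr[OF wU Xd] .
  have fA0: "fin_gen \<sigma> ?A0" using fin_gen_genstr[OF wU _ Xd] by simp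
  let ?ai = "inv_into (dom A) a"
  let ?k = "\<lambda>z. \<iota> (f (?ai z))"
  have e1: "emb \<sigma> ?ai ?A0 A" using emb_inv_restr[OF ea wA, of "a ` dom A"] dA0 by (simp add: genstr_def)
  have ek: "emb \<sigma> ?k ?A0 U" using emb_comp[OF emb_comp[OF e1 ef] io(1)] .
  have inj: "inj_on a (dom A)" using embD(2)[OF ea] .
  have ck: "\<forall>x\<in>dom ?A0. u (?k x) = u x"
  proof
    fix z assume "z \<in> dom ?A0"
    then obtain x where x: "x \<in> dom A" "z = a x" using dA0 by auto
    have "?ai z = x" using x inj by simp
    moreover have "f x \<in> dom B" using x homD(1)[OF embD(1)[OF ef]] by auto
    ultimately show "u (?k z) = u z" using io(2) c x by auto
  qed
  obtain \<alpha> where al: "iso \<sigma> \<alpha> U U" "\<forall>x\<in>dom U. u (\<alpha> x) = u x" "\<forall>x\<in>dom ?A0. \<alpha> x = ?k x"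
    using Ho sA0 fA0 ek ck unfolding homogeneous_hom_def by blast
  let ?ali = "inv_into (dom U) \<alpha>"
  have ali: "iso \<sigma> ?ali U U" using iso_inv[OF al(1) wU wU] .
  have injal: "inj_on \<alpha> (dom U)" and suru: "\<alpha> ` dom U = dom U" using al(1) unfolding iso_def emb_def by auto
  let ?e = "\<lambda>y. ?ali (\<iota> y)"
  have ee: "emb \<sigma> ?e B U" using emb_comp[OF io(1)] ali unfolding iso_def by blast
  have e1: "\<forall>x\<in>dom A. ?e (f x) = a x"
  proof
    fix x assume x: "x \<in> dom A"
    have ax: "a x \<in> dom ?A0" using x dA0 by auto
    have "\<iota> (f x) = \<alpha> (a x)" using al(3) ax x inj by simp
    moreover have "a x \<in> dom U" using x homD(1)[OF embD(1)[OF ea]] by auto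
    ultimately show "?e (f x) = a x" using injal by simp
  qed
  have e2: "\<forall>y\<in>dom B. u (?e y) = g y"
  proof
    fix y assume y: "y \<in> dom B"
    have iy: "\<iota> y \<in> dom U" using y homD(1)[OF embD(1)[OF io(1)]] by auto
    hence "?e y \<in> dom U" "\<alpha> (?e y) = \<iota> y" using suru by (auto simp: inv_into_into f_inv_into_f)
    thus "u (?e y) = g y" using al(2) io(2) y by metis
  qed
  show "\<exists>e. emb \<sigma> e B U \<and> (\<forall>x\<in>dom A. e (f x) = a x) \<and> (\<forall>y\<in>dom B. u (e y) = g y)"
    using ee e1 e2 by blast
qed

lemma EP_unique:
  assumes K: "is_age \<sigma> C" and E: "EP \<sigma> C T U u" and U: "U \<in> cl \<sigma> C" and hu: "hom \<sigma> u U T"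
    and Un: "universal_within \<sigma> C u' U' T" and Ho: "homogeneous_hom \<sigma> u' U' T"
  shows "\<exists>h. iso \<sigma> h U' U \<and> (\<forall>x\<in>dom U'. u' x = u (h x))"
proof -
  have E': "EP \<sigma> C T U' u'" using univ_homog_EP[OF K Un Ho] .
  have U': "U' \<in> cl \<sigma> C" and hu': "hom \<sigma> u' U' T" using Un unfolding universal_within_def by auto
  obtain p where "pinv \<sigma> U' U u' u {} p" using base_pinv[OF K U' U hu' hu] by blast
  then obtain H where "iso \<sigma> H U' U" "\<forall>x\<in>dom U'. u (H x) = u' x"
    using EP_bf[OF K E' E U' U hu' hu] by blast
  thus ?thesis by auto
qed


lemma emb_of_comp:
  assumes g: "hom \<sigma> g M D" and k: "hom \<sigma> k D E" and e: "emb \<sigma> e M E" and c: "\<forall>x\<in>dom M. k (g x) = e x"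
  shows "emb \<sigma> g M D"
proof (rule embI[OF g])
  show "inj_on g (dom M)"
  proof (rule inj_onI)
    fix x y assume "x \<in> dom M" "y \<in> dom M" "g x = g y"
    hence "e x = e y" using c by metis
    thus "x = y" using embD(2)[OF e] \<open>x \<in> dom M\<close> \<open>y \<in> dom M\<close> by (auto dest: inj_onD)
  qed
  show "rel M R xs" if a: "set xs \<subseteq> dom M" "length xs = fst \<sigma> R" "rel D R (map g xs)" for xs R
  proof -
    have "set (map g xs) \<subseteq> dom D" using a homD(1)[OF g] by auto
    hence "rel E R (map k (map g xs))" using homD(3)[OF k, of "map g xs" R] a by simp
    moreover have "map k (map g xs) = map e xs" using a c by (induct xs) auto
    ultimately show ?thesis using embD(3)[OF e a(1,2)] by metis
  qed
qed

lemma amalg_step: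
  assumes SF: "strict_fraisse \<sigma> \<U>" and T: "T \<in> cl \<sigma> \<U>" and sub: "C \<subseteq> \<U>" and FR: "free_in \<sigma> C \<U>"
    and M: "M \<in> C" and A: "A \<in> C" and B: "B \<in> C"
    and a: "emb \<sigma> a A M" and f: "emb \<sigma> f A B" and m: "hom \<sigma> m M T" and g: "hom \<sigma> g B T"
    and c: "\<forall>x\<in>dom A. g (f x) = m (a x)"
  shows "\<exists>D i e d. D \<in> C \<and> emb \<sigma> i M D \<and> emb \<sigma> e B D \<and> hom \<sigma> d D T \<and>
     (\<forall>x\<in>dom A. i (a x) = e (f x)) \<and> (\<forall>x\<in>dom M. d (i x) = m x) \<and> (\<forall>y\<in>dom B. d (e y) = g y)"
proof -
  have KU: "is_age \<sigma> \<U>" and AP: "amalg_prop \<sigma> \<U>" using SF unfolding strict_fraisse_def fraisse_def by auto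
  have MU: "M \<in> \<U>" and AU: "A \<in> \<U>" and BU: "B \<in> \<U>" using sub M A B by auto
  have S: "\<forall>A\<in>\<U>. \<forall>B1\<in>\<U>. \<forall>B2\<in>\<U>. \<forall>f1 f2. emb \<sigma> f1 A B1 \<and> emb \<sigma> f2 A B2 \<longrightarrow>
        (\<exists>D\<in>\<U>. \<exists>g1 g2. pushout \<sigma> \<U> A B1 B2 f1 f2 D g1 g2)"
    using SF unfolding strict_fraisse_def by blast
  obtain D g1 g2 where D: "D \<in> \<U>" and po: "pushout \<sigma> \<U> A M B a f D g1 g2"
    using S[rule_format, OF AU MU BU, of a f] a f by blast
  have FR': "\<forall>A\<in>C. \<forall>B1\<in>C. \<forall>B2\<in>C. \<forall>f1 f2 D g1 g2.
        emb \<sigma> f1 A B1 \<and> emb \<sigma> f2 A B2 \<and> D \<in> \<U> \<and> pushout \<sigma> \<U> A B1 B2 f1 f2 D g1 g2 \<longrightarrow> D \<in> C"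
    using FR unfolding free_in_def by blast
  have DC: "D \<in> C" using FR'[rule_format, OF A M B, of a f D g1 g2] a f D po by blast
  have hg1: "hom \<sigma> g1 M D" and hg2: "hom \<sigma> g2 B D" and com: "\<forall>x\<in>dom A. g1 (a x) = g2 (f x)"
    and univ: "\<forall>E\<in>cl \<sigma> \<U>. \<forall>k1 k2. hom \<sigma> k1 M E \<and> hom \<sigma> k2 B E \<and> (\<forall>x\<in>dom A. k1 (a x) = k2 (f x)) \<longrightarrow>
        (\<exists>k. hom \<sigma> k D E \<and> (\<forall>x\<in>dom M. k (g1 x) = k1 x) \<and> (\<forall>x\<in>dom B. k (g2 x) = k2 x))"
    using po unfolding pushout_def by blast+
  obtain d where d: "hom \<sigma> d D T" "\<forall>x\<in>dom M. d (g1 x) = m x" "\<forall>x\<in>dom B. d (g2 x) = g x"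
    using univ[rule_format, OF T, of m g] m g c by auto
  obtain C' e1 e2 where C': "C' \<in> \<U>" "emb \<sigma> e1 M C'" "emb \<sigma> e2 B C'" "\<forall>x\<in>dom A. e1 (a x) = e2 (f x)"
    using AP[unfolded amalg_prop_def, rule_format, OF AU MU BU, of a f] a f by blast
  have C'cl: "C' \<in> cl \<sigma> \<U>" using age_sub_cl[OF KU C'(1)] .
  obtain k where k: "hom \<sigma> k D C'" "\<forall>x\<in>dom M. k (g1 x) = e1 x" "\<forall>x\<in>dom B. k (g2 x) = e2 x"
    using univ[rule_format, OF C'cl, of e1 e2] embD(1)[OF C'(2)] embD(1)[OF C'(3)] C'(4) by auto
  have "emb \<sigma> g1 M D" using emb_of_comp[OF hg1 k(1) C'(2) k(2)] .
  moreover have "emb \<sigma> g2 B D" using emb_of_comp[OF hg2 k(1) C'(3) k(3)] .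
  ultimately show ?thesis using DC d com by blast
qed

definition tr :: "(nat \<Rightarrow> nat) \<Rightarrow> ('r,'f) struc \<Rightarrow> ('r,'f) struc" where
  "tr r D = \<lparr>dom = r ` dom D,
     rel = (\<lambda>R xs. set xs \<subseteq> r ` dom D \<and> rel D R (map (inv_into (dom D) r) xs)),
     fn = (\<lambda>F xs. r (fn D F (map (inv_into (dom D) r) xs)))\<rparr>"

lemma tr_simps[simp]: "dom (tr r D) = r ` dom D"
  "rel (tr r D) R xs \<longleftrightarrow> set xs \<subseteq> r ` dom D \<and> rel D R (map (inv_into (dom D) r) xs)"
  "fn (tr r D) F xs = r (fn D F (map (inv_into (dom D) r) xs))"
  by (auto simp: tr_def)

lemma tr_iso:
  assumes w: "wf_struc \<sigma> D" and inj: "inj_on r (dom D)"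
  shows "wf_struc \<sigma> (tr r D) \<and> iso \<sigma> r D (tr r D)"
proof -
  let ?ri = "inv_into (dom D) r"
  have mi: "set xs \<subseteq> r ` dom D \<Longrightarrow> set (map ?ri xs) \<subseteq> dom D" for xs
    by (induct xs) (auto simp: inv_into_into)
  have mr: "set xs \<subseteq> dom D \<Longrightarrow> map ?ri (map r xs) = xs" for xs
    using inj by (induct xs) auto
  have wf: "wf_struc \<sigma> (tr r D)"
    unfolding wf_struc_def
  proof (intro conjI allI impI)
    fix F xs assume a: "set xs \<subseteq> dom (tr r D) \<and> length xs = snd \<sigma> F"
    have "fn D F (map ?ri xs) \<in> dom D" using wf_fn[OF w mi] a by simp
    thus "fn (tr r D) F xs \<in> dom (tr r D)" by simp
  next
    fix R xs assume a: "rel (tr r D) R xs"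
    thus "set xs \<subseteq> dom (tr r D)" by simp
  next
    fix R xs assume a: "rel (tr r D) R xs"
    have "length (map ?ri xs) = fst \<sigma> R" using wf_rel[OF w, of R "map ?ri xs"] a by simp
    thus "length xs = fst \<sigma> R" by simp
  qed
  have hom: "hom \<sigma> r D (tr r D)"
  proof (rule homI)
    show "x \<in> dom D \<Longrightarrow> r x \<in> dom (tr r D)" for x by simp
    show "set xs \<subseteq> dom D \<Longrightarrow> length xs = snd \<sigma> F \<Longrightarrow> r (fn D F xs) = fn (tr r D) F (map r xs)" for xs F
      using mr by simp
    show "set xs \<subseteq> dom D \<Longrightarrow> length xs = fst \<sigma> R \<Longrightarrow> rel D R xs \<Longrightarrow> rel (tr r D) R (map r xs)" for xs R
      using mr by auto
  qed
  have "emb \<sigma> r D (tr r D)"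
  proof (rule embI[OF hom inj])
    show "set xs \<subseteq> dom D \<Longrightarrow> length xs = fst \<sigma> R \<Longrightarrow> rel (tr r D) R (map r xs) \<Longrightarrow> rel D R xs" for xs R
      using mr by auto
  qed
  thus ?thesis using wf unfolding iso_def by simp
qed

definition lvl :: "nat \<Rightarrow> nat set" where "lvl n = {x. fst (prod_decode x) \<le> n}"

lemma lvl_mono: "n \<le> m \<Longrightarrow> lvl n \<subseteq> lvl m"
  unfolding lvl_def by auto

lemma rename:
  assumes wM: "wf_struc \<sigma> M" and wD: "wf_struc \<sigma> D" and i: "emb \<sigma> i M D" and L: "dom M \<subseteq> lvl n"
  shows "\<exists>D' r. iso \<sigma> r D D' \<and> wf_struc \<sigma> D' \<and> substr \<sigma> M D' \<and> dom D' \<subseteq> lvl (Suc n) \<and>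
    (\<forall>x\<in>dom M. r (i x) = x)"
proof -
  define r where "r y = (if y \<in> i ` dom M then inv_into (dom M) i y else prod_encode (Suc n, y))" for y
  have ii: "inj_on i (dom M)" using embD(2)[OF i] .
  have iM: "i ` dom M \<subseteq> dom D" using homD(1)[OF embD(1)[OF i]] by auto
  have ri: "x \<in> dom M \<Longrightarrow> r (i x) = x" for x using ii unfolding r_def by auto
  have rL: "r y \<in> lvl (Suc n)" for y
  proof (cases "y \<in> i ` dom M")
    case True
    then have "r y \<in> dom M" unfolding r_def by (auto simp: inv_into_into)
    then show ?thesis using L lvl_mono[of n "Suc n"] by auto
  next
    case False then show ?thesis unfolding r_def lvl_def by simp
  qed
  have inj: "inj_on r (dom D)"
  proof (rule inj_onI)
    fix y1 y2 assume y: "y1 \<in> dom D" "y2 \<in> dom D" "r y1 = r y2"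
    show "y1 = y2"
    proof (cases "y1 \<in> i ` dom M"; cases "y2 \<in> i ` dom M")
      assume "y1 \<in> i ` dom M" "y2 \<in> i ` dom M"
      then obtain x1 x2 where "x1 \<in> dom M" "x2 \<in> dom M" "y1 = i x1" "y2 = i x2" by auto
      thus ?thesis using y ri by auto
    next
      assume a: "y1 \<in> i ` dom M" "y2 \<notin> i ` dom M"
      then have "r y1 \<in> dom M" unfolding r_def by (auto simp: inv_into_into)
      hence "r y1 \<in> lvl n" using L by auto
      moreover have "r y2 \<notin> lvl n" using a unfolding r_def lvl_def by simp
      ultimately show ?thesis using y by simp
    next
      assume a: "y1 \<notin> i ` dom M" "y2 \<in> i ` dom M"
      then have "r y2 \<in> dom M" unfolding r_def by (auto simp: inv_into_into)
      hence "r y2 \<in> lvl n" using L by auto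
      moreover have "r y1 \<notin> lvl n" using a unfolding r_def lvl_def by simp
      ultimately show ?thesis using y by simp
    next
      assume a: "y1 \<notin> i ` dom M" "y2 \<notin> i ` dom M"
      thus ?thesis using y unfolding r_def by (simp add: prod_encode_eq)
    qed
  qed
  let ?D' = "tr r D"
  have T: "wf_struc \<sigma> ?D'" "iso \<sigma> r D ?D'" using tr_iso[OF wD inj] by auto
  let ?ri = "inv_into (dom D) r"
  have rim: "x \<in> dom M \<Longrightarrow> ?ri x = i x" for x
    using ri inj iM by (metis image_subset_iff inv_into_f_f)
  have mrim: "set xs \<subseteq> dom M \<Longrightarrow> map ?ri xs = map i xs" for xs using rim by (induct xs) auto
  have MD: "dom M \<subseteq> dom ?D'" using ri iM by force
  have "emb \<sigma> (\<lambda>x. x) M ?D'"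
  proof (rule embI)
    show "hom \<sigma> (\<lambda>x. x) M ?D'"
    proof (rule homI)
      show "x \<in> dom M \<Longrightarrow> x \<in> dom ?D'" for x using MD by auto
      show "fn M F xs = fn ?D' F (map (\<lambda>x. x) xs)" if a: "set xs \<subseteq> dom M" "length xs = snd \<sigma> F" for xs F
      proof -
        have "fn ?D' F xs = r (fn D F (map i xs))" by (simp only: tr_simps mrim[OF a(1)])
        also have "\<dots> = r (i (fn M F xs))" using homD(2)[OF embD(1)[OF i] a] by simp
        also have "\<dots> = fn M F xs" using ri wf_fn[OF wM a] by simp
        finally show ?thesis by simp
      qed
      show "rel ?D' R (map (\<lambda>x. x) xs)" if a: "set xs \<subseteq> dom M" "length xs = fst \<sigma> R" "rel M R xs" for xs R
        using homD(3)[OF embD(1)[OF i] a] a(1) MD by (auto simp add: mrim[OF a(1)])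
    qed
    show "inj_on (\<lambda>x. x) (dom M)" by simp
    show "rel M R xs" if a: "set xs \<subseteq> dom M" "length xs = fst \<sigma> R" "rel ?D' R (map (\<lambda>x. x) xs)" for xs R
      using embD(3)[OF i a(1,2)] a(3) by (simp add: mrim[OF a(1)])
  qed
  hence "substr \<sigma> M ?D'" using wM T(1) MD unfolding substr_def by blast
  moreover have "dom ?D' \<subseteq> lvl (Suc n)" using rL by auto
  ultimately show ?thesis using T ri by blast
qed


lemma EP_from_S:
  assumes KC: "is_age \<sigma> C" and SC: "S \<subseteq> C" and rep: "\<forall>A\<in>C. \<exists>B\<in>S. isomorphic \<sigma> A B"
    and ES: "\<And>A B a f g. A \<in> S \<Longrightarrow> B \<in> S \<Longrightarrow> emb \<sigma> a A U \<Longrightarrow> emb \<sigma> f A B \<Longrightarrow> hom \<sigma> g B T \<Longrightarrow>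
       (\<forall>x\<in>dom A. g (f x) = u (a x)) \<Longrightarrow>
       (\<exists>e. emb \<sigma> e B U \<and> (\<forall>x\<in>dom A. e (f x) = a x) \<and> (\<forall>y\<in>dom B. u (e y) = g y))"
  shows "EP \<sigma> C T U u"
  unfolding EP_def
proof (intro ballI allI impI)
  fix A B a f g
  assume A: "A \<in> C" and B: "B \<in> C"
    and H: "emb \<sigma> a A U \<and> emb \<sigma> f A B \<and> hom \<sigma> g B T \<and> (\<forall>x\<in>dom A. g (f x) = u (a x))"
  have ea: "emb \<sigma> a A U" and ef: "emb \<sigma> f A B" and hg: "hom \<sigma> g B T"
    and c: "\<forall>x\<in>dom A. g (f x) = u (a x)" using H by auto
  obtain A' \<phi> where A': "A' \<in> S" "iso \<sigma> \<phi> A A'" using rep A unfolding isomorphic_def by blast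
  obtain B' \<psi> where B': "B' \<in> S" "iso \<sigma> \<psi> B B'" using rep B unfolding isomorphic_def by blast
  have wA: "wf_struc \<sigma> A" "wf_struc \<sigma> A'" using age_wf[OF KC] A A' SC by auto
  have wB: "wf_struc \<sigma> B" "wf_struc \<sigma> B'" using age_wf[OF KC] B B' SC by auto
  let ?\<phi>i = "inv_into (dom A) \<phi>" and ?\<psi>i = "inv_into (dom B) \<psi>"
  have pi: "iso \<sigma> ?\<phi>i A' A" using iso_inv[OF A'(2) wA] .
  have qi: "iso \<sigma> ?\<psi>i B' B" using iso_inv[OF B'(2) wB] .
  have injp: "inj_on \<phi> (dom A)" and injq: "inj_on \<psi> (dom B)" using A'(2) B'(2) unfolding iso_def emb_def by auto
  have imp: "\<phi> ` dom A = dom A'" using A'(2) unfolding iso_def by auto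
  let ?a = "\<lambda>x. a (?\<phi>i x)" and ?f = "\<lambda>x. \<psi> (f (?\<phi>i x))" and ?g = "\<lambda>y. g (?\<psi>i y)"
  have pe: "emb \<sigma> ?\<phi>i A' A" using pi unfolding iso_def by simp
  have qe: "emb \<sigma> ?\<psi>i B' B" using qi unfolding iso_def by simp
  have pse: "emb \<sigma> \<psi> B B'" using B'(2) unfolding iso_def by simp
  have ea': "emb \<sigma> ?a A' U" using emb_comp[OF pe ea] .
  have ef': "emb \<sigma> ?f A' B'" using emb_comp[OF emb_comp[OF pe ef] pse] .
  have hg': "hom \<sigma> ?g B' T" using hom_comp[OF embD(1)[OF qe] hg] .
  have c': "\<forall>x\<in>dom A'. ?g (?f x) = u (?a x)"
  proof
    fix x assume x: "x \<in> dom A'"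
    have px: "?\<phi>i x \<in> dom A" using x imp by (auto simp: inv_into_into)
    have "f (?\<phi>i x) \<in> dom B" using px homD(1)[OF embD(1)[OF ef]] by auto
    hence "?\<psi>i (\<psi> (f (?\<phi>i x))) = f (?\<phi>i x)" using injq by simp
    thus "?g (?f x) = u (?a x)" using c px by simp
  qed
  obtain e' where e': "emb \<sigma> e' B' U" "\<forall>x\<in>dom A'. e' (?f x) = ?a x" "\<forall>y\<in>dom B'. u (e' y) = ?g y"
    using ES[OF A'(1) B'(1) ea' ef' hg' c'] by blast
  let ?e = "\<lambda>y. e' (\<psi> y)"
  have ee: "emb \<sigma> ?e B U" using emb_comp[OF pse e'(1)] .
  have e1: "\<forall>x\<in>dom A. ?e (f x) = a x"
  proof
    fix x assume x: "x \<in> dom A"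
    have "\<phi> x \<in> dom A'" "?\<phi>i (\<phi> x) = x" using x imp injp by auto
    thus "?e (f x) = a x" using e'(2) by metis
  qed
  have e2: "\<forall>y\<in>dom B. u (?e y) = g y"
  proof
    fix y assume y: "y \<in> dom B"
    have "\<psi> y \<in> dom B'" using y B'(2) unfolding iso_def by auto
    moreover have "?\<psi>i (\<psi> y) = y" using y injq by simp
    ultimately show "u (?e y) = g y" using e'(3) by metis
  qed
  show "\<exists>e. emb \<sigma> e B U \<and> (\<forall>x\<in>dom A. e (f x) = a x) \<and> (\<forall>y\<in>dom B. u (e y) = g y)"
    using ee e1 e2 by blast
qed


locale ectx =
  fixes \<sigma> :: "('r,'f) sig" and UU :: "('r,'f) struc set" and C :: "('r,'f) struc set" and T :: "('r,'f) struc"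
  assumes SF: "strict_fraisse \<sigma> UU" and TU: "T \<in> cl \<sigma> UU" and FC: "fraisse \<sigma> C" and sub: "C \<subseteq> UU"
    and FR: "free_in \<sigma> C UU"
begin

lemma KC: "is_age \<sigma> C" using FC unfolding fraisse_def by simp
lemma KU: "is_age \<sigma> UU" using SF unfolding strict_fraisse_def fraisse_def by simp

definition S where "S = (SOME S. countable S \<and> S \<subseteq> C \<and> (\<forall>A\<in>C. \<exists>B\<in>S. isomorphic \<sigma> A B))"

lemma S_props: "countable S" "S \<subseteq> C" "\<forall>A\<in>C. \<exists>B\<in>S. isomorphic \<sigma> A B"
proof -
  have "\<exists>S. countable S \<and> S \<subseteq> C \<and> (\<forall>A\<in>C. \<exists>B\<in>S. isomorphic \<sigma> A B)" using KC unfolding is_age_def by blast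
  from someI_ex[OF this] show "countable S" "S \<subseteq> C" "\<forall>A\<in>C. \<exists>B\<in>S. isomorphic \<sigma> A B"
    unfolding S_def by auto
qed

lemma S_ne: "S \<noteq> {}"
proof -
  obtain A where "A \<in> C" using KC unfolding is_age_def by blast
  thus ?thesis using S_props(3) by blast
qed

definition gl where "gl A = (SOME xs. set xs \<subseteq> dom A \<and> genset \<sigma> A (set xs) = dom A)"

lemma gl: "A \<in> C \<Longrightarrow> set (gl A) \<subseteq> dom A \<and> genset \<sigma> A (set (gl A)) = dom A"
  unfolding gl_def by (rule someI_ex[OF gens_of[OF KC]])

definition tcode where "tcode A B (a::nat\<Rightarrow>nat) (f::nat\<Rightarrow>nat) (g::nat\<Rightarrow>nat) =
   (A, B, map a (gl A), map f (gl A), map g (gl B))"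

definition CODES where "CODES = S \<times> S \<times> (UNIV :: (nat list \<times> nat list \<times> nat list) set)"

definition cenum where "cenum = from_nat_into CODES"

lemma CODES_countable: "countable CODES"
  unfolding CODES_def using S_props(1) by (intro countable_SIGMA) auto

lemma cenum_surj: "A \<in> S \<Longrightarrow> B \<in> S \<Longrightarrow> \<exists>j. cenum j = tcode A B a f g"
  unfolding cenum_def using from_nat_into_surj[OF CODES_countable] unfolding CODES_def tcode_def by auto

definition task where "task M m A B a f g \<longleftrightarrow> A \<in> S \<and> B \<in> S \<and> emb \<sigma> a A M \<and> emb \<sigma> f A B \<and>
   hom \<sigma> g B T \<and> (\<forall>x\<in>dom A. g (f x) = m (a x))"

definition realized where "realized M m A B a f g \<longleftrightarrow>
   (\<exists>e. emb \<sigma> e B M \<and> (\<forall>x\<in>dom A. e (f x) = a x) \<and> (\<forall>y\<in>dom B. m (e y) = g y))"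

lemma code_agree:
  assumes t1: "task M m A B a f g" and t2: "task M m A B a' f' g'"
    and c: "tcode A B a f g = tcode A B a' f' g'" and r: "realized M' m' A B a f g"
  shows "realized M' m' A B a' f' g'"
proof -
  have A: "A \<in> C" and B: "B \<in> C" using t1 S_props(2) unfolding task_def by auto
  have wA: "wf_struc \<sigma> A" and wB: "wf_struc \<sigma> B" using age_wf[OF KC] A B by auto
  have gA: "set (gl A) \<subseteq> dom A" "genset \<sigma> A (set (gl A)) = dom A" using gl[OF A] by auto
  have gB: "set (gl B) \<subseteq> dom B" "genset \<sigma> B (set (gl B)) = dom B" using gl[OF B] by auto
  have l: "map a (gl A) = map a' (gl A)" "map f (gl A) = map f' (gl A)" "map g (gl B) = map g' (gl B)"
    using c unfolding tcode_def by auto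
  have ha: "hom \<sigma> a A M" "hom \<sigma> a' A M" "hom \<sigma> f A B" "hom \<sigma> f' A B" "hom \<sigma> g B T" "hom \<sigma> g' B T"
    using t1 t2 unfolding task_def emb_def by auto
  have aa: "\<forall>x\<in>dom A. a x = a' x"
    using hom_agree_genset[OF wA gA(1) ha(1) ha(2)] l(1) gA(2) by (simp add: map_eq_conv)
  have ff: "\<forall>x\<in>dom A. f x = f' x"
    using hom_agree_genset[OF wA gA(1) ha(3) ha(4)] l(2) gA(2) by (simp add: map_eq_conv)
  have gg: "\<forall>x\<in>dom B. g x = g' x"
    using hom_agree_genset[OF wB gB(1) ha(5) ha(6)] l(3) gB(2) by (simp add: map_eq_conv)
  obtain e where e: "emb \<sigma> e B M'" "\<forall>x\<in>dom A. e (f x) = a x" "\<forall>y\<in>dom B. m' (e y) = g y"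
    using r unfolding realized_def by blast
  show ?thesis unfolding realized_def using e aa ff gg by (intro exI[of _ e]) auto
qed

definition cInv where "cInv n s \<longleftrightarrow> fst s \<in> C \<and> hom \<sigma> (snd s) (fst s) T \<and> dom (fst s) \<subseteq> lvl n"

definition cRel where "cRel n s s' \<longleftrightarrow> substr \<sigma> (fst s) (fst s') \<and> (\<forall>x\<in>dom (fst s). snd s' x = snd s x) \<and>
   (\<forall>A B a f g. task (fst s) (snd s) A B a f g \<and> tcode A B a f g = cenum (fst (prod_decode n)) \<longrightarrow>
      realized (fst s') (snd s') A B a f g)"

lemma cstep:
  assumes I: "cInv n s"
  shows "\<exists>s'. cInv (Suc n) s' \<and> cRel n s s'"
proof -
  obtain M m where s: "s = (M, m)" by (cases s)
  have M: "M \<in> C" and hm: "hom \<sigma> m M T" and L: "dom M \<subseteq> lvl n" using I s unfolding cInv_def by auto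
  have wM: "wf_struc \<sigma> M" using age_wf[OF KC M] .
  let ?c = "cenum (fst (prod_decode n))"
  show ?thesis
  proof (cases "\<exists>A B a f g. task M m A B a f g \<and> tcode A B a f g = ?c")
    case False
    have "cInv (Suc n) s" using I s lvl_mono[of n "Suc n"] unfolding cInv_def by auto
    moreover have "cRel n s s" using False s substr_refl[OF wM] unfolding cRel_def by auto
    ultimately show ?thesis by blast
  next
    case True
    then obtain A B a f g where t: "task M m A B a f g" and tc: "tcode A B a f g = ?c" by blast
    have A: "A \<in> C" and B: "B \<in> C" using t S_props(2) unfolding task_def by auto
    have ea: "emb \<sigma> a A M" and ef: "emb \<sigma> f A B" and hg: "hom \<sigma> g B T"
      and c: "\<forall>x\<in>dom A. g (f x) = m (a x)" using t unfolding task_def by auto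
    obtain D i e d where D: "D \<in> C" "emb \<sigma> i M D" "emb \<sigma> e B D" "hom \<sigma> d D T"
      "\<forall>x\<in>dom A. i (a x) = e (f x)" "\<forall>x\<in>dom M. d (i x) = m x" "\<forall>y\<in>dom B. d (e y) = g y"
      using amalg_step[OF SF TU sub FR M A B ea ef hm hg c] by blast
    have wD: "wf_struc \<sigma> D" using age_wf[OF KC D(1)] .
    obtain D' r where R: "iso \<sigma> r D D'" "wf_struc \<sigma> D'" "substr \<sigma> M D'" "dom D' \<subseteq> lvl (Suc n)"
      "\<forall>x\<in>dom M. r (i x) = x"
      using rename[OF wM wD D(2) L] by blast
    let ?ri = "inv_into (dom D) r"
    have riso: "iso \<sigma> ?ri D' D" using iso_inv[OF R(1) wD R(2)] .
    have injr: "inj_on r (dom D)" using R(1) unfolding iso_def emb_def by auto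
    have iM: "x \<in> dom M \<Longrightarrow> i x \<in> dom D" for x using homD(1)[OF embD(1)[OF D(2)]] by auto
    have eB: "y \<in> dom B \<Longrightarrow> e y \<in> dom D" for y using homD(1)[OF embD(1)[OF D(3)]] by auto
    let ?m' = "\<lambda>x. d (?ri x)"
    have D'C: "D' \<in> C" using age_iso[OF KC D(1) R(2) riso] .
    have hm': "hom \<sigma> ?m' D' T" using hom_comp[OF embD(1)[OF iso_def[THEN iffD1, OF riso, THEN conjunct1]] D(4)] .
    have I': "cInv (Suc n) (D', ?m')" using D'C hm' R(4) unfolding cInv_def by auto
    have agree: "\<forall>x\<in>dom M. ?m' x = m x"
    proof
      fix x assume x: "x \<in> dom M"
      have "?ri x = i x" using R(5) x iM[OF x] injr by (metis inv_into_f_f)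
      thus "?m' x = m x" using D(6) x by simp
    qed
    have re: "realized D' ?m' A B a f g"
      unfolding realized_def
    proof (intro exI[of _ "\<lambda>y. r (e y)"] conjI ballI)
      show "emb \<sigma> (\<lambda>y. r (e y)) B D'" using emb_comp[OF D(3)] R(1) unfolding iso_def by blast
      fix x assume x: "x \<in> dom A"
      have "a x \<in> dom M" using x homD(1)[OF embD(1)[OF ea]] by auto
      thus "r (e (f x)) = a x" using D(5) R(5) x by metis
    next
      fix y assume y: "y \<in> dom B"
      have "?ri (r (e y)) = e y" using eB[OF y] injr by simp
      thus "?m' (r (e y)) = g y" using D(7) y by simp
    qed
    have "cRel n s (D', ?m')"
      unfolding cRel_def
    proof (intro conjI allI impI)
      show "substr \<sigma> (fst s) (fst (D', ?m'))" using R(3) s by simp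
      show "\<forall>x\<in>dom (fst s). snd (D', ?m') x = snd s x" using agree s by simp
      fix A' B' a' f' g'
      assume a: "task (fst s) (snd s) A' B' a' f' g' \<and> tcode A' B' a' f' g' = ?c"
      hence eq: "tcode A' B' a' f' g' = tcode A B a f g" using tc by simp
      hence "A' = A" "B' = B" unfolding tcode_def by auto
      thus "realized (fst (D', ?m')) (snd (D', ?m')) A' B' a' f' g'"
        using code_agree[OF t, of a' f' g' D' ?m'] a s eq re by auto
    qed
    thus ?thesis using I' by blast
  qed
qed

lemma cinit: "\<exists>M m. cInv 0 (M, m)"
proof -
  obtain A0 where A0: "A0 \<in> C" using KC unfolding is_age_def by blast
  have wA0: "wf_struc \<sigma> A0" using age_wf[OF KC A0] .
  have wT: "wf_struc \<sigma> T" using cl_wf[OF TU] .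
  have G: "genstr \<sigma> A0 {} \<in> C" using genstr_in[OF KC age_sub_cl[OF KC A0]] by simp
  have GT: "genstr \<sigma> T {} \<in> UU" using genstr_in[OF KU TU] by simp
  obtain \<phi> where phi: "iso \<sigma> \<phi> (genstr \<sigma> A0 {}) (genstr \<sigma> T {})"
    using zero_iso[OF KU wA0 wT _ GT] G sub by blast
  let ?G = "genstr \<sigma> A0 {}"
  have wG: "wf_struc \<sigma> ?G" using wf_genstr[OF wA0] by simp
  have hphi: "hom \<sigma> \<phi> ?G T"
    using emb_substr_up[OF _ substr_genstr[OF wT]] phi unfolding iso_def emb_def by blast
  let ?r = "\<lambda>y::nat. prod_encode (0, y)"
  have injr: "inj_on ?r (dom ?G)" by (auto simp: inj_on_def prod_encode_eq)
  have tr: "wf_struc \<sigma> (tr ?r ?G)" "iso \<sigma> ?r ?G (tr ?r ?G)" using tr_iso[OF wG injr] by auto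
  have ri: "iso \<sigma> (inv_into (dom ?G) ?r) (tr ?r ?G) ?G" using iso_inv[OF tr(2) wG tr(1)] .
  have "tr ?r ?G \<in> C" using age_iso[OF KC G tr(1) ri] .
  moreover have "hom \<sigma> (\<lambda>x. \<phi> (inv_into (dom ?G) ?r x)) (tr ?r ?G) T"
    using hom_comp[OF _ hphi] ri unfolding iso_def emb_def by blast
  moreover have "dom (tr ?r ?G) \<subseteq> lvl 0" unfolding lvl_def by auto
  ultimately show ?thesis unfolding cInv_def by (intro exI) auto
qed

end


context ectx begin

lemma exists_EP: "\<exists>V v. V \<in> cl \<sigma> C \<and> hom \<sigma> v V T \<and> EP \<sigma> C T V v"
proof -
  obtain M0 m0 where I0: "cInv 0 (M0, m0)" using cinit by blast
  obtain st where st: "st 0 = (M0,m0)" "\<And>n. cInv n (st n) \<and> cRel n (st n) (st (Suc n))"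
    using dep_choice[of cInv "(M0,m0)" cRel, OF I0 cstep] by blast
  define Mn where "Mn n = fst (st n)" for n
  define mn where "mn n = snd (st n)" for n
  have MC: "Mn n \<in> C" and hmn: "hom \<sigma> (mn n) (Mn n) T" for n
    using st(2)[of n] unfolding cInv_def Mn_def mn_def by auto
  have wMn: "wf_struc \<sigma> (Mn n)" for n using age_wf[OF KC MC] .
  have sS: "substr \<sigma> (Mn n) (Mn (Suc n))" and agS: "\<forall>x\<in>dom (Mn n). mn (Suc n) x = mn n x" for n
    using st(2)[of n] unfolding cRel_def Mn_def mn_def by auto
  have cs: "n \<le> k \<Longrightarrow> substr \<sigma> (Mn n) (Mn k) \<and> (\<forall>x\<in>dom (Mn n). mn k x = mn n x)" for n k
  proof (induct k rule: dec_induct)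
    case base then show ?case using substr_refl[OF wMn] by simp
  next
    case (step k)
    have "substr \<sigma> (Mn n) (Mn (Suc k))" using substr_trans step(3) sS by blast
    moreover have "dom (Mn n) \<subseteq> dom (Mn k)" using step(3) unfolding substr_def by blast
    ultimately show ?case using step(3) agS[of k] by auto
  qed
  have Dm: "n \<le> k \<Longrightarrow> dom (Mn n) \<subseteq> dom (Mn k)" for n k using cs unfolding substr_def by blast
  define V where "V = \<lparr>dom = (\<Union>n. dom (Mn n)), rel = (\<lambda>R xs. \<exists>n. rel (Mn n) R xs),
     fn = (\<lambda>F xs. fn (Mn (LEAST n. set xs \<subseteq> dom (Mn n))) F xs)\<rparr>"
  define v where "v x = mn (LEAST n. x \<in> dom (Mn n)) x" for x
  have domV: "dom V = (\<Union>n. dom (Mn n))" unfolding V_def by simp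
  have fin: "set xs \<subseteq> dom V \<Longrightarrow> \<exists>N. set xs \<subseteq> dom (Mn N)" for xs
  proof -
    assume a: "set xs \<subseteq> dom V"
    have "\<forall>x\<in>set xs. \<exists>n. x \<in> dom (Mn n)" using a domV by auto
    thus ?thesis using finite_in_mono_union[of "\<lambda>n. dom (Mn n)" "set xs", OF Dm] by blast
  qed
  have fnV: "fn V F xs = fn (Mn k) F xs" if a: "set xs \<subseteq> dom (Mn k)" "length xs = snd \<sigma> F" for xs k F
  proof -
    let ?l = "LEAST n. set xs \<subseteq> dom (Mn n)"
    have l1: "?l \<le> k" by (rule Least_le) (rule a(1))
    have l2: "set xs \<subseteq> dom (Mn ?l)" by (rule LeastI[of _ k]) (rule a(1))
    note l = l1 l2
    have "fn V F xs = fn (Mn ?l) F xs" unfolding V_def by simp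
    also have "\<dots> = fn (Mn k) F xs" using substr_fn[OF conjunct1[OF cs[OF l(1)]] l(2) a(2)] by simp
    finally show ?thesis .
  qed
  have relV: "rel V R xs = rel (Mn k) R xs" if a: "set xs \<subseteq> dom (Mn k)" for xs k R
  proof
    assume "rel V R xs"
    then obtain n where n: "rel (Mn n) R xs" unfolding V_def by auto
    have xn: "set xs \<subseteq> dom (Mn n)" using wf_rel[OF wMn n] by simp
    have "rel (Mn (max n k)) R xs" using substr_rel[OF conjunct1[OF cs[of n "max n k"]] xn] n by simp
    thus "rel (Mn k) R xs" using substr_rel[OF conjunct1[OF cs[of k "max n k"]] a] by simp
  next
    assume "rel (Mn k) R xs" thus "rel V R xs" unfolding V_def by auto
  qed
  have vV: "x \<in> dom (Mn k) \<Longrightarrow> v x = mn k x" for x k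
  proof -
    assume x: "x \<in> dom (Mn k)"
    let ?l = "LEAST n. x \<in> dom (Mn n)"
    have l1: "?l \<le> k" by (rule Least_le) (rule x)
    have l2: "x \<in> dom (Mn ?l)" by (rule LeastI[of _ k]) (rule x)
    note l = l1 l2
    thus ?thesis using cs[OF l(1)] unfolding v_def by auto
  qed
  have wV: "wf_struc \<sigma> V"
    unfolding wf_struc_def
  proof (intro conjI allI impI)
    fix F xs assume a: "set xs \<subseteq> dom V \<and> length xs = snd \<sigma> F"
    then obtain N where N: "set xs \<subseteq> dom (Mn N)" using fin by blast
    have "fn (Mn N) F xs \<in> dom (Mn N)" using wf_fn[OF wMn N] a by simp
    thus "fn V F xs \<in> dom V" using fnV[OF N] a domV by auto
  next
    fix R xs assume "rel V R xs"
    then obtain n where n: "rel (Mn n) R xs" unfolding V_def by auto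
    thus "set xs \<subseteq> dom V" using wf_rel[OF wMn n] domV by auto
  next
    fix R xs assume "rel V R xs"
    then obtain n where n: "rel (Mn n) R xs" unfolding V_def by auto
    thus "length xs = fst \<sigma> R" using wf_rel[OF wMn n] by simp
  qed
  have subV: "substr \<sigma> (Mn k) V" for k
  proof -
    have d: "dom (Mn k) \<subseteq> dom V" using domV by auto
    have "emb \<sigma> (\<lambda>x. x) (Mn k) V"
    proof (rule embI)
      show "hom \<sigma> (\<lambda>x. x) (Mn k) V"
      proof (rule homI)
        show "x \<in> dom (Mn k) \<Longrightarrow> x \<in> dom V" for x using d by auto
        show "set xs \<subseteq> dom (Mn k) \<Longrightarrow> length xs = snd \<sigma> F \<Longrightarrow> fn (Mn k) F xs = fn V F (map (\<lambda>x. x) xs)" for xs F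
          using fnV by simp
        show "set xs \<subseteq> dom (Mn k) \<Longrightarrow> length xs = fst \<sigma> R \<Longrightarrow> rel (Mn k) R xs \<Longrightarrow> rel V R (map (\<lambda>x. x) xs)" for xs R
          using relV by simp
      qed
      show "inj_on (\<lambda>x. x) (dom (Mn k))" by simp
      show "set xs \<subseteq> dom (Mn k) \<Longrightarrow> length xs = fst \<sigma> R \<Longrightarrow> rel V R (map (\<lambda>x. x) xs) \<Longrightarrow> rel (Mn k) R xs" for xs R
        using relV by simp
    qed
    thus ?thesis using wMn wV d unfolding substr_def by blast
  qed
  have hv: "hom \<sigma> v V T"
  proof (rule homI)
    show "x \<in> dom V \<Longrightarrow> v x \<in> dom T" for x
      using domV vV homD(1)[OF hmn] by auto
    show "v (fn V F xs) = fn T F (map v xs)" if a: "set xs \<subseteq> dom V" "length xs = snd \<sigma> F" for xs F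
    proof -
      obtain N where N: "set xs \<subseteq> dom (Mn N)" using fin a(1) by blast
      have f: "fn V F xs = fn (Mn N) F xs" using fnV[OF N a(2)] .
      have "fn (Mn N) F xs \<in> dom (Mn N)" using wf_fn[OF wMn N a(2)] .
      hence "v (fn V F xs) = mn N (fn (Mn N) F xs)" using vV f by simp
      also have "\<dots> = fn T F (map (mn N) xs)" using homD(2)[OF hmn N a(2)] .
      also have "map (mn N) xs = map v xs" using N vV by (induct xs) auto
      finally show ?thesis .
    qed
    show "rel T R (map v xs)" if a: "set xs \<subseteq> dom V" "length xs = fst \<sigma> R" "rel V R xs" for xs R
    proof -
      obtain N where N: "set xs \<subseteq> dom (Mn N)" using fin a(1) by blast
      have "rel T R (map (mn N) xs)" using homD(3)[OF hmn N a(2)] relV[OF N] a(3) by simp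
      moreover have "map (mn N) xs = map v xs" using N vV by (induct xs) auto
      ultimately show ?thesis by simp
    qed
  qed
  have VC: "V \<in> cl \<sigma> C"
    unfolding cl_def
  proof (intro CollectI conjI allI impI wV)
    fix B assume B: "substr \<sigma> B V \<and> fin_gen \<sigma> B"
    have sB: "substr \<sigma> B V" and fB: "fin_gen \<sigma> B" using B by auto
    obtain X where X: "finite X" "X \<subseteq> dom B" "genset \<sigma> B X = dom B" using fin_gen_D[OF fB] by blast
    have XV: "X \<subseteq> dom V" using X(2) sB unfolding substr_def by auto
    obtain xs where xs: "set xs = X" using finite_list[OF X(1)] by blast
    obtain N where N: "X \<subseteq> dom (Mn N)" using fin[of xs] xs XV by blast
    have "genset \<sigma> V X \<subseteq> dom (Mn N)" using genset_least[OF substr_closed[OF subV] N] .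
    hence "dom B \<subseteq> dom (Mn N)" using genset_substr[OF sB X(2)] X(3) by simp
    hence "substr \<sigma> B (Mn N)" using substr_between[OF sB subV] by blast
    hence "B \<in> C" using age_substr[OF KC MC _ fB] by blast
    moreover have "isomorphic \<sigma> B B" using iso_id[of \<sigma> B] fB unfolding fin_gen_def isomorphic_def by blast
    ultimately show "\<exists>C'\<in>C. isomorphic \<sigma> B C'" by blast
  qed
  have ES: "\<exists>e. emb \<sigma> e B V \<and> (\<forall>x\<in>dom A. e (f x) = a x) \<and> (\<forall>y\<in>dom B. v (e y) = g y)"
    if A: "A \<in> S" and B: "B \<in> S" and ea: "emb \<sigma> a A V" and ef: "emb \<sigma> f A B" and hg: "hom \<sigma> g B T"
      and c: "\<forall>x\<in>dom A. g (f x) = v (a x)" for A B a f g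
  proof -
    have AC: "A \<in> C" using A S_props(2) by auto
    have wA: "wf_struc \<sigma> A" using age_wf[OF KC AC] .
    have gA: "set (gl A) \<subseteq> dom A" "genset \<sigma> A (set (gl A)) = dom A" using gl[OF AC] by auto
    have "set (map a (gl A)) \<subseteq> dom V" using gA(1) homD(1)[OF embD(1)[OF ea]] by auto
    then obtain k where "set (map a (gl A)) \<subseteq> dom (Mn k)" using fin by blast
    hence k: "a ` set (gl A) \<subseteq> dom (Mn k)" by simp
    have "a ` dom A = genset \<sigma> V (a ` set (gl A))"
      using hom_image_genset[OF wA wV gA(1) embD(1)[OF ea]] gA(2) by simp
    also have "\<dots> \<subseteq> dom (Mn k)" using genset_least[OF substr_closed[OF subV] k] .
    finally have ak: "a ` dom A \<subseteq> dom (Mn k)" .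
    have eak: "emb \<sigma> a A (Mn k)" using emb_into_substr[OF ea subV ak wA] .
    obtain j where j: "cenum j = tcode A B a f g" using cenum_surj[OF A B] by blast
    define n where "n = prod_encode (j, k)"
    have kn: "k \<le> n" unfolding n_def by (rule le_prod_encode_2)
    have jn: "fst (prod_decode n) = j" unfolding n_def by simp
    have ean: "emb \<sigma> a A (Mn n)" using emb_substr_up[OF eak conjunct1[OF cs[OF kn]]] .
    have "\<forall>x\<in>dom A. g (f x) = mn n (a x)"
    proof
      fix x assume x: "x \<in> dom A"
      hence "a x \<in> dom (Mn n)" using ak Dm[OF kn] by auto
      thus "g (f x) = mn n (a x)" using c x vV by simp
    qed
    hence "task (Mn n) (mn n) A B a f g" using A B ean ef hg unfolding task_def by simp
    hence "realized (Mn (Suc n)) (mn (Suc n)) A B a f g"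
      using st(2)[of n] j jn unfolding cRel_def Mn_def mn_def by auto
    then obtain e where e: "emb \<sigma> e B (Mn (Suc n))" "\<forall>x\<in>dom A. e (f x) = a x"
      "\<forall>y\<in>dom B. mn (Suc n) (e y) = g y" unfolding realized_def by blast
    have "\<forall>y\<in>dom B. v (e y) = g y"
    proof
      fix y assume y: "y \<in> dom B"
      hence "e y \<in> dom (Mn (Suc n))" using homD(1)[OF embD(1)[OF e(1)]] by auto
      thus "v (e y) = g y" using vV e(3) y by simp
    qed
    thus ?thesis using emb_substr_up[OF e(1) subV] e(2) by blast
  qed
  have "EP \<sigma> C T V v" using EP_from_S[OF KC S_props(2,3)] ES by blast
  thus ?thesis using VC hv by blast
qed

end


theorem theorem3p3:
  fixes \<sigma> :: "('r, 'f::countable) sig"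
    and \<U> \<C> :: "('r, 'f) struc set"
    and T :: "('r, 'f) struc"
  assumes "strict_fraisse \<sigma> \<U>"
    and "T \<in> cl \<sigma> \<U>"
    and "fraisse \<sigma> \<C>"
    and "\<C> \<subseteq> \<U>"
    and "free_in \<sigma> \<C> \<U>"
  shows "\<exists>U u. universal_within \<sigma> \<C> u U T \<and> homogeneous_hom \<sigma> u U T \<and>
           (\<forall>U' u'. universal_within \<sigma> \<C> u' U' T \<and> homogeneous_hom \<sigma> u' U' T \<longrightarrow>
              (\<exists>h. iso \<sigma> h U' U \<and> (\<forall>x\<in>dom U'. u' x = u (h x))))"
proof -
  interpret ectx \<sigma> \<U> \<C> T using assms by (simp add: ectx_def)
  obtain V v where V: "V \<in> cl \<sigma> \<C>" "hom \<sigma> v V T" "EP \<sigma> \<C> T V v" using exists_EP by blast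
  have K: "is_age \<sigma> \<C>" using KC .
  have wT: "wf_struc \<sigma> T" using cl_wf[OF assms(2)] .
  have "universal_within \<sigma> \<C> v V T"
    unfolding universal_within_def using V wT EP_universal[OF K V(3) V(1) V(2)] by blast
  moreover have "homogeneous_hom \<sigma> v V T" using EP_homog[OF K V(3) V(1) V(2)] .
  moreover have "\<forall>U' u'. universal_within \<sigma> \<C> u' U' T \<and> homogeneous_hom \<sigma> u' U' T \<longrightarrow>
              (\<exists>h. iso \<sigma> h U' V \<and> (\<forall>x\<in>dom U'. u' x = v (h x)))"
    using EP_unique[OF K V(3) V(1) V(2)] by blast
  ultimately show ?thesis by blast
qed

end
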